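(* There exists a strictly decreasing function $\delta:[0,\tau_D]\to(0,1]$ with $\delta(0)=1$, depending only on $n,a^*,b_*$, such that the following holds. For any trajectory of system (5), any $t_0\ge0$, and any $i\in\mathcal V_F$, $j\in\mathcal V_L$ such that the arc $(j,i)$ belongs to $\mathcal E_{\sigma(t)}$ for all $t\in[t_0,t_0+\tau_D)$, $$|x_i(t)|_{\mathcal L(y(t))}\le\delta(t-t_0)\,|x(t_0)|_{\mathcal L(y(t_0))}+2\sqrt2\int_{t_0}^{t_0+\tau_D}|z(s)|\,ds\quad\text{for all }t\in[t_0,t_0+\tau_D].$$
   Context: Standing setup. Fix integers $n\ge 2$, $k\ge 1$, $d\ge 1$. The follower set is $\mathcal V_F=\{1,\dots,n\}$ and the leader set is $\mathcal V_L=\{\hat 1,\dots,\hat k\}$ (disjoint from $\mathcal V_F$); $\mathcal V=\mathcal V_F\cup\mathcal V_L$. The interaction topology is a time-varying digraph $\mathcal G_{\sigma(t)}=(\mathcal V,\mathcal E_{\sigma(t)})$, where $\sigma:[0,\infty)\to\mathcal P$ is a piecewise constant switching signal taking values in a finite set $\mathcal P$ of digraphs on $\mathcal V$; no arc of any of these digraphs enters a leader. An arc $(j,i)$ means that $i$ receives information from $j$. Dwell-time assumption: any two consecutive switching instants of $\sigma$ are separated by at least $\tau_D>0$. For $i\in\mathcal V_F$, $N_i(\sigma(t))=\{j\in\mathcal V_F:(j,i)\in\mathcal E_{\sigma(t)}\}$ and $L_i(\sigma(t))=\{j\in\mathcal V_L:(j,i)\in\mathcal E_{\sigma(t)}\}$.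 System (5): $\dot y_i=u_i(y,t)$ for $i=1,\dots,k$, and $\dot x_i=\sum_{j\in N_i(\sigma(t))}a_{ij}(x,y,t)(x_j-x_i)+\sum_{j\in L_i(\sigma(t))}b_{ij}(x,y,t)(y_j-x_i)+w_i(t)$ for $i=1,\dots,n$, where $x_i,y_j\in\mathbb R^d$, $x=(x_1,\dots,x_n)$, $y=(y_1,\dots,y_k)$; each $u_i(y,t)$ is continuous in $y$ and piecewise continuous in $t$; each $w_i$ is continuous; the weights $a_{ij},b_{ij}$ are continuous and satisfy $a_*\le a_{ij}(x,y,t)\le a^*$, $b_{ij}(x,y,t)\ge b_*$ for all $x,y,t$, with constants $0<a_*\le a^*$, $b_*>0$. Along a trajectory, $z(t)=(u_1(y(t),t),\dots,u_k(y(t),t),w_1(t),\dots,w_n(t))\in\mathbb R^{(n+k)d}$. Set notation: $|\cdot|$ is the Euclidean norm; for a closed convex $K\subset\mathbb R^d$, $|v|_K=\inf_{p\in K}|v-p|$; $\mathcal L(y(t))=\mathrm{co}\{y_1(t),\dots,y_k(t)\}$ (convex hull); $|x(t)|_{\mathcal L(y(t))}=\max_{i\in\mathcal V_F}|x_i(t)|_{\mathcal L(y(t))}$. *)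

theory Defs
  imports "HOL-Analysis.Analysis"
begin

text \<open>Points of R^d are represented as functions nat => real, of which only the
components 0..<d are relevant (d varies inside the statement, so it cannot be a type).
Followers are Inl 1..Inl n, leaders are Inr 1..Inr k.\<close>

type_synonym pt = "nat \<Rightarrow> real"
type_synonym vtx = "nat + nat"
type_synonym digraph = "(vtx \<times> vtx) set"

definition enorm :: "nat \<Rightarrow> pt \<Rightarrow> real" where
  "enorm d v = sqrt (\<Sum>l<d. (v l)\<^sup>2)"

definition leader_hull :: "nat \<Rightarrow> nat \<Rightarrow> (nat \<Rightarrow> pt) \<Rightarrow> pt set" where
  "leader_hull d k ys = {p. \<exists>c. (\<forall>j\<in>{1..k}. 0 \<le> c j) \<and> (\<Sum>j=1..k. c j) = 1 \<and>
                              (\<forall>l<d. p l = (\<Sum>j=1..k. c j * ys j l))}"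

definition setdist_pt :: "nat \<Rightarrow> pt set \<Rightarrow> pt \<Rightarrow> real" where
  "setdist_pt d K v = Inf {enorm d (\<lambda>l. v l - p l) | p. p \<in> K}"

text \<open>|x|_{L(y)} = max over followers\<close>
definition max_dist :: "nat \<Rightarrow> nat \<Rightarrow> nat \<Rightarrow> (nat \<Rightarrow> pt) \<Rightarrow> (nat \<Rightarrow> pt) \<Rightarrow> real" where
  "max_dist d n k xs ys = (MAX i\<in>{1..n}. setdist_pt d (leader_hull d k ys) (xs i))"

definition admissible_graph :: "nat \<Rightarrow> nat \<Rightarrow> digraph \<Rightarrow> bool" where
  "admissible_graph n k E \<longleftrightarrow>
     E \<subseteq> (Inl ` {1..n} \<union> Inr ` {1..k}) \<times> (Inl ` {1..n} \<union> Inr ` {1..k}) \<and>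
     (\<forall>(p, q)\<in>E. q \<notin> Inr ` {1..k})"

text \<open>piecewise constant switching signal with values in P and dwell time tauD;
  S is the set of switching instants, sigma is right-continuous\<close>
definition dwell_switching :: "real \<Rightarrow> digraph set \<Rightarrow> (real \<Rightarrow> digraph) \<Rightarrow> bool" where
  "dwell_switching tauD P \<sigma> \<longleftrightarrow>
     (\<forall>t\<ge>0. \<sigma> t \<in> P) \<and>
     (\<exists>S. S \<subseteq> {0<..} \<and> (\<forall>s\<in>S. \<forall>s'\<in>S. s \<noteq> s' \<longrightarrow> \<bar>s - s'\<bar> \<ge> tauD) \<and>
          (\<forall>a b. 0 \<le> a \<longrightarrow> a < b \<longrightarrow> {a<..<b} \<inter> S = {} \<longrightarrow> (\<forall>t\<in>{a..<b}. \<sigma> t = \<sigma> a)))"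

definition Nset :: "nat \<Rightarrow> digraph \<Rightarrow> nat \<Rightarrow> nat set" where
  "Nset n E i = {j\<in>{1..n}. (Inl j, Inl i) \<in> E}"

definition Lset :: "nat \<Rightarrow> digraph \<Rightarrow> nat \<Rightarrow> nat set" where
  "Lset k E i = {j\<in>{1..k}. (Inr j, Inl i) \<in> E}"

definition weight_cont :: "nat \<Rightarrow> nat \<Rightarrow> nat \<Rightarrow> ((nat \<Rightarrow> pt) \<Rightarrow> (nat \<Rightarrow> pt) \<Rightarrow> real \<Rightarrow> real) \<Rightarrow> bool" where
  "weight_cont d n k f \<longleftrightarrow>
     (\<forall>X Y T x y t.
        (\<forall>i\<in>{1..n}. \<forall>l<d. (\<lambda>m. X m i l) \<longlonglongrightarrow> x i l) \<and>
        (\<forall>j\<in>{1..k}. \<forall>l<d. (\<lambda>m. Y m j l) \<longlonglongrightarrow> y j l) \<and> T \<longlonglongrightarrow> t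
        \<longrightarrow> (\<lambda>m. f (X m) (Y m) (T m)) \<longlonglongrightarrow> f x y t)"

definition input_cont_y :: "nat \<Rightarrow> nat \<Rightarrow> ((nat \<Rightarrow> pt) \<Rightarrow> pt) \<Rightarrow> bool" where
  "input_cont_y d k g \<longleftrightarrow>
     (\<forall>Y y. (\<forall>j\<in>{1..k}. \<forall>l<d. (\<lambda>m. Y m j l) \<longlonglongrightarrow> y j l)
        \<longrightarrow> (\<forall>l<d. (\<lambda>m. g (Y m) l) \<longlonglongrightarrow> g y l))"

definition pw_cont :: "nat \<Rightarrow> (real \<Rightarrow> pt) \<Rightarrow> bool" where
  "pw_cont d g \<longleftrightarrow>
     (\<forall>T\<ge>0. \<exists>F. finite F \<and>
        (\<forall>t\<in>{0..T} - F. \<forall>l<d. continuous (at t within {0..}) (\<lambda>s. g s l)) \<and>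
        (\<forall>t\<in>F. \<forall>l<d. (\<exists>L. ((\<lambda>s. g s l) \<longlongrightarrow> L) (at_left t)) \<and>
                      (\<exists>R. ((\<lambda>s. g s l) \<longlongrightarrow> R) (at_right t))))"

definition follower_rhs ::
  "nat \<Rightarrow> nat \<Rightarrow> (real \<Rightarrow> digraph)
   \<Rightarrow> (nat \<Rightarrow> nat \<Rightarrow> (nat \<Rightarrow> pt) \<Rightarrow> (nat \<Rightarrow> pt) \<Rightarrow> real \<Rightarrow> real)
   \<Rightarrow> (nat \<Rightarrow> nat \<Rightarrow> (nat \<Rightarrow> pt) \<Rightarrow> (nat \<Rightarrow> pt) \<Rightarrow> real \<Rightarrow> real)
   \<Rightarrow> (nat \<Rightarrow> real \<Rightarrow> pt) \<Rightarrow> (real \<Rightarrow> nat \<Rightarrow> pt) \<Rightarrow> (real \<Rightarrow> nat \<Rightarrow> pt)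
   \<Rightarrow> real \<Rightarrow> nat \<Rightarrow> pt" where
  "follower_rhs n k \<sigma> a b w x y t i = (\<lambda>l.
      (\<Sum>j\<in>Nset n (\<sigma> t) i. a i j (x t) (y t) t * (x t j l - x t i l))
    + (\<Sum>j\<in>Lset k (\<sigma> t) i. b i j (x t) (y t) t * (y t j l - x t i l))
    + w i t l)"

text \<open>(Caratheodory) trajectory of system (5) on [0,oo): absolutely continuous, i.e.
  the state is the integral of the (locally absolutely integrable) right-hand side\<close>
definition trajectory ::
  "nat \<Rightarrow> nat \<Rightarrow> nat \<Rightarrow> (real \<Rightarrow> digraph)
   \<Rightarrow> (nat \<Rightarrow> nat \<Rightarrow> (nat \<Rightarrow> pt) \<Rightarrow> (nat \<Rightarrow> pt) \<Rightarrow> real \<Rightarrow> real)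
   \<Rightarrow> (nat \<Rightarrow> nat \<Rightarrow> (nat \<Rightarrow> pt) \<Rightarrow> (nat \<Rightarrow> pt) \<Rightarrow> real \<Rightarrow> real)
   \<Rightarrow> (nat \<Rightarrow> (nat \<Rightarrow> pt) \<Rightarrow> real \<Rightarrow> pt) \<Rightarrow> (nat \<Rightarrow> real \<Rightarrow> pt)
   \<Rightarrow> (real \<Rightarrow> nat \<Rightarrow> pt) \<Rightarrow> (real \<Rightarrow> nat \<Rightarrow> pt) \<Rightarrow> bool" where
  "trajectory d n k \<sigma> a b u w x y \<longleftrightarrow>
     (\<forall>t\<ge>0. \<forall>i\<in>{1..k}. \<forall>l<d.
        (\<lambda>s. u i (y s) s l) absolutely_integrable_on {0..t} \<and>
        ((\<lambda>s. u i (y s) s l) has_integral (y t i l - y 0 i l)) {0..t}) \<and>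
     (\<forall>t\<ge>0. \<forall>i\<in>{1..n}. \<forall>l<d.
        (\<lambda>s. follower_rhs n k \<sigma> a b w x y s i l) absolutely_integrable_on {0..t} \<and>
        ((\<lambda>s. follower_rhs n k \<sigma> a b w x y s i l) has_integral (x t i l - x 0 i l)) {0..t})"

text \<open>|z(t)|, the Euclidean norm in R^{(n+k)d}\<close>
definition znorm :: "nat \<Rightarrow> nat \<Rightarrow> nat \<Rightarrow> (nat \<Rightarrow> (nat \<Rightarrow> pt) \<Rightarrow> real \<Rightarrow> pt)
   \<Rightarrow> (nat \<Rightarrow> real \<Rightarrow> pt) \<Rightarrow> (real \<Rightarrow> nat \<Rightarrow> pt) \<Rightarrow> real \<Rightarrow> real" where
  "znorm d n k u w y t =
     sqrt ((\<Sum>i\<in>{1..k}. \<Sum>l<d. (u i (y t) t l)\<^sup>2) + (\<Sum>i\<in>{1..n}. \<Sum>l<d. (w i t l)\<^sup>2))"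

end

theory Submission
  imports Defs
begin

lemma enorm_L2: "enorm d v = L2_set v {..<d}"
  by (simp add: enorm_def L2_set_def)

lemma enorm_cong: "(\<And>l. l < d \<Longrightarrow> u l = v l) \<Longrightarrow> enorm d u = enorm d v"
  unfolding enorm_def by (intro arg_cong[where f=sqrt] sum.cong) auto

lemma enorm_nonneg: "0 \<le> enorm d v"
  by (simp add: enorm_def sum_nonneg)

lemma enorm_triangle: "enorm d (\<lambda>l. u l + v l) \<le> enorm d u + enorm d v"
  unfolding enorm_L2 by (rule L2_set_triangle_ineq)

lemma enorm_scale: "enorm d (\<lambda>l. c * v l) = \<bar>c\<bar> * enorm d v"
  by (simp add: enorm_def power_mult_distrib sum_distrib_left[symmetric] real_sqrt_mult)

lemma enorm_zero: "enorm d (\<lambda>l. 0) = 0"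
  by (simp add: enorm_def)

lemma enorm_sum:
  assumes "finite I"
  shows "enorm d (\<lambda>l. \<Sum>m\<in>I. g m l) \<le> (\<Sum>m\<in>I. enorm d (g m))"
  using assms
proof (induction I rule: finite_induct)
  case empty
  then show ?case by (simp add: enorm_zero)
next
  case (insert m I)
  have "enorm d (\<lambda>l. \<Sum>m\<in>insert m I. g m l) = enorm d (\<lambda>l. g m l + (\<Sum>m\<in>I. g m l))"
    using insert by simp
  also have "\<dots> \<le> enorm d (g m) + enorm d (\<lambda>l. \<Sum>m\<in>I. g m l)"
    using enorm_triangle[of d "g m"] by simp
  also have "\<dots> \<le> enorm d (g m) + (\<Sum>m\<in>I. enorm d (g m))" using insert by simp
  finally show ?case using insert by simp
qed

lemma enorm_minus_commute: "enorm d (\<lambda>l. u l - v l) = enorm d (\<lambda>l. v l - u l)"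
  unfolding enorm_def by (simp add: power2_commute)

lemma enorm_le_sum_abs: "enorm d v \<le> (\<Sum>l<d. \<bar>v l\<bar>)"
  unfolding enorm_L2 by (rule L2_set_le_sum_abs)

lemma enorm_cs: "(\<Sum>l<d. u l * v l) \<le> enorm d u * enorm d v"
proof -
  have "(\<Sum>l<d. u l * v l) \<le> (\<Sum>l<d. \<bar>u l\<bar> * \<bar>v l\<bar>)"
    by (intro sum_mono) (metis abs_ge_self abs_mult)
  also have "\<dots> \<le> enorm d u * enorm d v" unfolding enorm_L2 by (rule L2_set_mult_ineq)
  finally show ?thesis .
qed

lemma enorm_self_inner: "(\<Sum>l<d. v l * v l) = (enorm d v)\<^sup>2"
  by (simp add: enorm_def sum_nonneg power2_eq_square)

lemma hull_vertex: "j \<in> {1..k} \<Longrightarrow> Y j \<in> leader_hull d k Y"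
proof -
  assume j: "j \<in> {1..k}"
  have "\<And>l. (\<Sum>j'=1..k. (if j' = j then 1 else 0) * Y j' l) = Y j l"
    using j by (simp add: if_distrib[of "\<lambda>z. z * _"] sum.delta cong: if_cong)
  moreover have "(\<Sum>j'=1..k. (if j' = j then 1 else (0::real))) = 1"
    using j by (simp add: sum.delta)
  ultimately show ?thesis unfolding leader_hull_def
    by (intro CollectI exI[of _ "\<lambda>j'. if j' = j then 1 else 0"]) auto
qed

lemma hull_nonempty: "1 \<le> k \<Longrightarrow> leader_hull d k Y \<noteq> {}"
  using hull_vertex[of 1 k Y d] by auto

lemma hull_convex:
  assumes "finite I" "\<And>m. m \<in> I \<Longrightarrow> 0 \<le> \<theta> m" "(\<Sum>m\<in>I. \<theta> m) = 1"
    "\<And>m. m \<in> I \<Longrightarrow> P m \<in> leader_hull d k Y"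
  shows "(\<lambda>l. \<Sum>m\<in>I. \<theta> m * P m l) \<in> leader_hull d k Y"
proof -
  have "\<forall>m\<in>I. \<exists>c. (\<forall>j\<in>{1..k}. 0 \<le> c j) \<and> (\<Sum>j=1..k. c j) = 1 \<and>
                              (\<forall>l<d. P m l = (\<Sum>j=1..k. c j * Y j l))"
    using assms(4) unfolding leader_hull_def by blast
  then obtain C where C: "\<And>m. m\<in>I \<Longrightarrow> (\<forall>j\<in>{1..k}. 0 \<le> C m j) \<and> (\<Sum>j=1..k. C m j) = 1 \<and>
                              (\<forall>l<d. P m l = (\<Sum>j=1..k. C m j * Y j l))"
    by metis
  define c where "c j = (\<Sum>m\<in>I. \<theta> m * C m j)" for j
  have c1: "\<forall>j\<in>{1..k}. 0 \<le> c j" unfolding c_def using C assms(2)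
    by (auto intro!: sum_nonneg)
  have "(\<Sum>j=1..k. c j) = (\<Sum>m\<in>I. \<theta> m * (\<Sum>j=1..k. C m j))"
    unfolding c_def by (simp add: sum_distrib_left) (rule sum.swap)
  also have "\<dots> = 1" using C assms(3) by simp
  finally have c2: "(\<Sum>j=1..k. c j) = 1" .
  have c3: "\<forall>l<d. (\<Sum>m\<in>I. \<theta> m * P m l) = (\<Sum>j=1..k. c j * Y j l)"
  proof (intro allI impI)
    fix l assume l: "l < d"
    have "(\<Sum>m\<in>I. \<theta> m * P m l) = (\<Sum>m\<in>I. \<theta> m * (\<Sum>j=1..k. C m j * Y j l))"
      using C l by (intro sum.cong) auto
    also have "\<dots> = (\<Sum>j=1..k. c j * Y j l)"
      unfolding c_def by (simp add: sum_distrib_left sum_distrib_right mult.assoc) (rule sum.swap)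
    finally show "(\<Sum>m\<in>I. \<theta> m * P m l) = (\<Sum>j=1..k. c j * Y j l)" .
  qed
  show ?thesis unfolding leader_hull_def using c1 c2 c3 by blast
qed

lemma sd_bdd: "bdd_below {enorm d (\<lambda>l. v l - p l) | p. p \<in> K}"
  by (rule bdd_belowI[of _ 0]) (auto simp: enorm_nonneg)

lemma sd_nonneg: "K \<noteq> {} \<Longrightarrow> 0 \<le> setdist_pt d K v"
  unfolding setdist_pt_def by (rule cInf_greatest) (auto simp: enorm_nonneg)

lemma sd_le: "p \<in> K \<Longrightarrow> setdist_pt d K v \<le> enorm d (\<lambda>l. v l - p l)"
  unfolding setdist_pt_def by (rule cInf_lower[OF _ sd_bdd]) auto

lemma sd_approx:
  assumes "K \<noteq> {}" "e > 0"
  shows "\<exists>p\<in>K. enorm d (\<lambda>l. v l - p l) < setdist_pt d K v + e"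
proof -
  have ne: "{enorm d (\<lambda>l. v l - p l) | p. p \<in> K} \<noteq> {}" using assms by auto
  have "Inf {enorm d (\<lambda>l. v l - p l) | p. p \<in> K} < setdist_pt d K v + e"
    using assms unfolding setdist_pt_def by simp
  then obtain z where "z \<in> {enorm d (\<lambda>l. v l - p l) | p. p \<in> K}" "z < setdist_pt d K v + e"
    using cInf_less_iff[OF ne sd_bdd] by blast
  then show ?thesis by auto
qed

lemma sd_member: "p \<in> K \<Longrightarrow> setdist_pt d K p = 0"
  using sd_le[of p K d p] sd_nonneg[of K d p] by (auto simp: enorm_zero)

lemma sd_cong: "(\<And>l. l < d \<Longrightarrow> v l = v' l) \<Longrightarrow> setdist_pt d K v = setdist_pt d K v'"
proof -
  assume h: "\<And>l. l < d \<Longrightarrow> v l = v' l"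
  have "\<And>p. enorm d (\<lambda>l. v l - p l) = enorm d (\<lambda>l. v' l - p l)"
    by (rule enorm_cong) (simp add: h)
  then show ?thesis unfolding setdist_pt_def by simp
qed

lemma sd_lip:
  assumes "K \<noteq> {}"
  shows "setdist_pt d K v \<le> setdist_pt d K v' + enorm d (\<lambda>l. v l - v' l)"
proof (rule field_le_epsilon)
  fix e :: real assume e: "0 < e"
  obtain p where p: "p \<in> K" "enorm d (\<lambda>l. v' l - p l) < setdist_pt d K v' + e"
    using sd_approx[OF assms e] by blast
  have "setdist_pt d K v \<le> enorm d (\<lambda>l. v l - p l)" by (rule sd_le[OF p(1)])
  also have "\<dots> = enorm d (\<lambda>l. (v l - v' l) + (v' l - p l))" by simp
  also have "\<dots> \<le> enorm d (\<lambda>l. v l - v' l) + enorm d (\<lambda>l. v' l - p l)" by (rule enorm_triangle)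
  finally show "setdist_pt d K v \<le> setdist_pt d K v' + enorm d (\<lambda>l. v l - v' l) + e"
    using p(2) by simp
qed

lemma sd_convex:
  assumes k: "1 \<le> k" and I: "finite I" "\<And>m. m \<in> I \<Longrightarrow> 0 \<le> \<theta> m" "(\<Sum>m\<in>I. \<theta> m) = 1"
    and v: "\<And>l. l < d \<Longrightarrow> v l = (\<Sum>m\<in>I. \<theta> m * q m l)"
  shows "setdist_pt d (leader_hull d k Y) v \<le> (\<Sum>m\<in>I. \<theta> m * setdist_pt d (leader_hull d k Y) (q m))"
proof (rule field_le_epsilon)
  fix e :: real assume e: "0 < e"
  let ?K = "leader_hull d k Y"
  have ne: "?K \<noteq> {}" using hull_nonempty[OF k] .
  have "\<forall>m\<in>I. \<exists>p\<in>?K. enorm d (\<lambda>l. q m l - p l) < setdist_pt d ?K (q m) + e"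
    using sd_approx[OF ne e] by blast
  then obtain p where p: "\<And>m. m\<in>I \<Longrightarrow> p m \<in> ?K \<and> enorm d (\<lambda>l. q m l - p m l) < setdist_pt d ?K (q m) + e"
    by metis
  have P: "(\<lambda>l. \<Sum>m\<in>I. \<theta> m * p m l) \<in> ?K"
    by (rule hull_convex[OF I]) (use p in auto)
  have "setdist_pt d ?K v \<le> enorm d (\<lambda>l. v l - (\<Sum>m\<in>I. \<theta> m * p m l))"
    by (rule sd_le[OF P])
  also have "\<dots> = enorm d (\<lambda>l. \<Sum>m\<in>I. \<theta> m * (q m l - p m l))"
    by (rule enorm_cong) (simp add: v right_diff_distrib sum_subtractf)
  also have "\<dots> \<le> (\<Sum>m\<in>I. enorm d (\<lambda>l. \<theta> m * (q m l - p m l)))"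
    by (rule enorm_sum[OF I(1)])
  also have "\<dots> = (\<Sum>m\<in>I. \<theta> m * enorm d (\<lambda>l. q m l - p m l))"
    using I(2) by (intro sum.cong) (auto simp: enorm_scale)
  also have "\<dots> \<le> (\<Sum>m\<in>I. \<theta> m * (setdist_pt d ?K (q m) + e))"
    using I(2) p by (intro sum_mono mult_left_mono) (auto intro: less_imp_le)
  also have "\<dots> = (\<Sum>m\<in>I. \<theta> m * setdist_pt d ?K (q m)) + e"
    using I(3) by (simp add: distrib_left sum.distrib sum_distrib_right[symmetric])
  finally show "setdist_pt d ?K v \<le> (\<Sum>m\<in>I. \<theta> m * setdist_pt d ?K (q m)) + e" .
qed

lemma sd_hull_shift:
  assumes k: "1 \<le> k" and D: "\<And>j. j \<in> {1..k} \<Longrightarrow> enorm d (\<lambda>l. Y' j l - Y j l) \<le> D"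
  shows "setdist_pt d (leader_hull d k Y') v \<le> setdist_pt d (leader_hull d k Y) v + D"
proof (rule field_le_epsilon)
  fix e :: real assume e: "0 < e"
  obtain p where p: "p \<in> leader_hull d k Y" "enorm d (\<lambda>l. v l - p l) < setdist_pt d (leader_hull d k Y) v + e"
    using sd_approx[OF hull_nonempty[OF k] e] by blast
  then obtain c where c: "\<forall>j\<in>{1..k}. 0 \<le> c j" "(\<Sum>j=1..k. c j) = 1" "\<forall>l<d. p l = (\<Sum>j=1..k. c j * Y j l)"
    unfolding leader_hull_def by blast
  define p' where "p' l = (\<Sum>j=1..k. c j * Y' j l)" for l
  have p': "p' \<in> leader_hull d k Y'" unfolding leader_hull_def p'_def using c by blast
  have "setdist_pt d (leader_hull d k Y') v \<le> enorm d (\<lambda>l. v l - p' l)" by (rule sd_le[OF p'])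
  also have "\<dots> = enorm d (\<lambda>l. (v l - p l) + (\<Sum>j=1..k. c j * (Y j l - Y' j l)))"
    by (rule enorm_cong) (simp add: c p'_def right_diff_distrib sum_subtractf)
  also have "\<dots> \<le> enorm d (\<lambda>l. v l - p l) + enorm d (\<lambda>l. \<Sum>j=1..k. c j * (Y j l - Y' j l))"
    by (rule enorm_triangle)
  also have "enorm d (\<lambda>l. \<Sum>j=1..k. c j * (Y j l - Y' j l)) \<le> (\<Sum>j=1..k. enorm d (\<lambda>l. c j * (Y j l - Y' j l)))"
    by (rule enorm_sum) simp
  also have "\<dots> = (\<Sum>j=1..k. c j * enorm d (\<lambda>l. Y' j l - Y j l))"
    using c(1) by (intro sum.cong refl) (simp add: enorm_scale enorm_minus_commute[of d "Y _"])
  also have "\<dots> \<le> (\<Sum>j=1..k. c j * D)"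
    using c(1) D by (intro sum_mono mult_left_mono) auto
  also have "\<dots> = D" using c(2) by (simp add: sum_distrib_right[symmetric])
  finally show "setdist_pt d (leader_hull d k Y') v \<le> setdist_pt d (leader_hull d k Y) v + D + e"
    using p(2) by simp
qed


lemma gen_incr:
  fixes F X :: "real \<Rightarrow> real"
  assumes H: "\<And>t. 0 \<le> t \<Longrightarrow> (F has_integral (X t - X 0)) {0..t}"
    and t: "0 \<le> t" "t \<le> t'"
  shows "(F has_integral (X t' - X t)) {t..t'}"
proof -
  have i: "F integrable_on {0..t'}" using H[of t'] t by (auto intro: has_integral_integrable)
  have "integral {0..t} F + integral {t..t'} F = integral {0..t'} F"
    using t by (intro Henstock_Kurzweil_Integration.integral_combine[OF _ _ i]) auto
  moreover have "integral {0..t} F = X t - X 0" using H t by (simp add: integral_unique)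
  moreover have "integral {0..t'} F = X t' - X 0" using H t by (simp add: integral_unique)
  moreover have "F integrable_on {t..t'}" using t by (intro integrable_subinterval_real[OF i]) auto
  ultimately have "integral {t..t'} F = X t' - X t" by simp
  then show ?thesis using \<open>F integrable_on {t..t'}\<close> by (metis has_integral_integral)
qed

lemma gen_cont:
  fixes F X :: "real \<Rightarrow> real"
  assumes H: "\<And>t. 0 \<le> t \<Longrightarrow> (F has_integral (X t - X 0)) {0..t}" and T: "0 \<le> T"
  shows "continuous_on {0..T} X"
proof -
  have i: "F integrable_on {0..T}" using H[of T] T by (auto intro: has_integral_integrable)
  have c: "continuous_on {0..T} (\<lambda>s. X 0 + integral {0..s} F)"
    by (intro continuous_intros indefinite_integral_continuous_1 i)
  show ?thesis
  proof (rule continuous_on_eq[OF c])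
    fix r assume "r \<in> {0..T}"
    then show "X 0 + integral {0..r} F = X r" using integral_unique[OF H[of r]] by simp
  qed
qed

lemma cont_by_bound:
  fixes F g :: "real \<Rightarrow> real"
  assumes b: "\<And>r. r \<in> S \<Longrightarrow> \<bar>F r - F s\<bar> \<le> g r" and g: "continuous (at s within S) g" and g0: "g s = 0"
  shows "continuous (at s within S) F"
proof -
  have gl: "(g \<longlongrightarrow> 0) (at s within S)" using g g0 by (simp add: continuous_within)
  have ev: "\<forall>\<^sub>F r in at s within S. norm (F r - F s) \<le> g r"
    unfolding eventually_at_filter by (intro always_eventually) (simp add: b)
  have "((\<lambda>r. F r - F s) \<longlongrightarrow> 0) (at s within S)"
    by (rule Lim_null_comparison[OF ev gl])
  then show ?thesis unfolding continuous_within by (rule LIM_zero_cancel)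
qed

lemma max_diff_bound:
  fixes F G :: "'a \<Rightarrow> real"
  assumes "finite I" "I \<noteq> {}"
  shows "\<bar>(MAX i\<in>I. F i) - (MAX i\<in>I. G i)\<bar> \<le> (\<Sum>i\<in>I. \<bar>F i - G i\<bar>)"
proof -
  have one: "(MAX i\<in>I. F i) \<le> (MAX i\<in>I. G i) + (\<Sum>i\<in>I. \<bar>F i - G i\<bar>)" for F G :: "'a \<Rightarrow> real"
  proof -
    have "(MAX i\<in>I. F i) \<in> F ` I" using Max_in[of "F ` I"] assms by simp
    then obtain i0 where i0: "i0 \<in> I" "(MAX i\<in>I. F i) = F i0" by auto
    have "G i0 \<le> (MAX i\<in>I. G i)" using i0 assms by (intro Max_ge) auto
    moreover have "\<bar>F i0 - G i0\<bar> \<le> (\<Sum>i\<in>I. \<bar>F i - G i\<bar>)"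
      using i0 assms by (intro member_le_sum) auto
    ultimately show ?thesis using i0 by linarith
  qed
  have "(MAX i\<in>I. G i) \<le> (MAX i\<in>I. F i) + (\<Sum>i\<in>I. \<bar>F i - G i\<bar>)"
    using one[of G F] by (simp add: abs_minus_commute)
  then show ?thesis using one[of F G] by linarith
qed

lemma continuous_enorm_diff:
  assumes "\<And>l. l < d \<Longrightarrow> continuous (at s within S) (\<lambda>r. X r l)"
  shows "continuous (at s within S) (\<lambda>r. enorm d (\<lambda>l. X r l - X s l))"
proof -
  have "continuous (at s within S) (\<lambda>r. \<Sum>l<d. (X r l - X s l)\<^sup>2)"
    by (intro continuous_sum continuous_power continuous_diff assms continuous_const) auto
  then show ?thesis unfolding enorm_def
    by (rule continuous_within_compose2[OF _ continuous_at_imp_continuous_within[OF isCont_real_sqrt]])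
qed

lemma sqrt_sum_sq_absint:
  fixes v :: "'a \<Rightarrow> real \<Rightarrow> real" and S :: "real set"
  assumes "finite F" "\<And>m. m\<in>F \<Longrightarrow> v m absolutely_integrable_on S"
  shows "(\<lambda>r. sqrt (\<Sum>m\<in>F. (v m r)\<^sup>2)) absolutely_integrable_on S"
  using assms
proof (induction F rule: finite_induct)
  case empty
  then show ?case by simp
next
  case (insert m F)
  let ?g = "\<lambda>r. sqrt (\<Sum>m\<in>F. (v m r)\<^sup>2)"
  have g: "?g absolutely_integrable_on S" using insert by auto
  have vm: "v m absolutely_integrable_on S" using insert by auto
  have p: "(\<lambda>r. v m r *\<^sub>R (1::real,0::real) + ?g r *\<^sub>R (0,1)) absolutely_integrable_on S"
    by (intro set_integral_add absolutely_integrable_scaleR_right g vm)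
  have eq: "(\<lambda>r. sqrt (\<Sum>m\<in>insert m F. (v m r)\<^sup>2)) = (\<lambda>r. norm (v m r *\<^sub>R (1::real,0::real) + ?g r *\<^sub>R (0,1)))"
  proof
    fix r
    have nn: "0 \<le> (\<Sum>m\<in>F. (v m r)\<^sup>2)" by (simp add: sum_nonneg)
    show "sqrt (\<Sum>m\<in>insert m F. (v m r)\<^sup>2) = norm (v m r *\<^sub>R (1::real,0::real) + ?g r *\<^sub>R (0,1))"
      using insert nn by (simp add: norm_Pair)
  qed
  show ?case unfolding eq using absolutely_integrable_norm[OF p] by (simp add: o_def)
qed

lemma sqrt_double_sum_absint:
  fixes v :: "'a \<Rightarrow> 'b \<Rightarrow> real \<Rightarrow> real" and S :: "real set"
  assumes "finite I" "finite J" "\<And>i l. i\<in>I \<Longrightarrow> l \<in> J \<Longrightarrow> v i l absolutely_integrable_on S"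
  shows "(\<lambda>r. sqrt (\<Sum>i\<in>I. \<Sum>l\<in>J. (v i l r)\<^sup>2)) absolutely_integrable_on S"
proof -
  have "(\<lambda>r. sqrt (\<Sum>i\<in>I. (sqrt (\<Sum>l\<in>J. (v i l r)\<^sup>2))\<^sup>2)) absolutely_integrable_on S"
    using assms by (intro sqrt_sum_sq_absint) auto
  moreover have "\<And>r. (\<Sum>i\<in>I. (sqrt (\<Sum>l\<in>J. (v i l r)\<^sup>2))\<^sup>2) = (\<Sum>i\<in>I. \<Sum>l\<in>J. (v i l r)\<^sup>2)"
    by (intro sum.cong refl) (simp add: sum_nonneg)
  ultimately show ?thesis by simp
qed


lemma cmp_aux:
  fixes \<Phi> :: "real \<Rightarrow> real"
  assumes ab: "a \<le> b" and cont: "continuous_on {a..b} \<Phi>"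
    and loc: "\<And>t e. t \<in> {a..<b} \<Longrightarrow> e > 0 \<Longrightarrow> \<exists>\<eta>>0. \<forall>h. 0 < h \<longrightarrow> h < \<eta> \<longrightarrow> \<Phi> (t+h) \<le> \<Phi> t + e*h"
    and e: "e > 0"
  shows "\<Phi> b \<le> \<Phi> a + e * (b - a)"
proof -
  define T where "T = {r \<in> {a..b}. \<Phi> r \<le> \<Phi> a + e * (r - a)}"
  have clT: "closed T" unfolding T_def
    by (rule continuous_on_closed_Collect_le[OF cont]) (auto intro!: continuous_intros)
  define S where "S = {s \<in> {a..b}. {a..s} \<subseteq> T}"
  have aS: "a \<in> S" using ab unfolding S_def T_def by auto
  have bdd: "bdd_above S" unfolding S_def by (rule bdd_aboveI[of _ b]) auto
  define s where "s = Sup S"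
  have as: "a \<le> s" unfolding s_def using aS bdd by (rule cSup_upper)
  have sb: "s \<le> b" unfolding s_def using aS by (intro cSup_least) (auto simp: S_def)
  have lt: "{a..<s} \<subseteq> T"
  proof
    fix r assume r: "r \<in> {a..<s}"
    then obtain s' where "s' \<in> S" "r < s'" using less_cSupD[of S r] aS unfolding s_def by auto
    then show "r \<in> T" using r unfolding S_def by auto
  qed
  have sT: "{a..s} \<subseteq> T"
  proof (cases "a = s")
    case True then show ?thesis using aS unfolding S_def by auto
  next
    case False
    then have "a < s" using as by simp
    then have "closure {a..<s} = {a..s}" by simp
    moreover have "closure {a..<s} \<subseteq> T" using lt clT by (simp add: closure_minimal)
    ultimately show ?thesis by simp
  qed
  have "s = b"
  proof (rule ccontr)
    assume "s \<noteq> b"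
    then have sb': "s < b" using sb by simp
    obtain \<eta> where \<eta>: "\<eta> > 0" "\<forall>h. 0 < h \<longrightarrow> h < \<eta> \<longrightarrow> \<Phi> (s+h) \<le> \<Phi> s + e*h"
      using loc[of s e] sb' as e by auto
    define h where "h = min (\<eta>/2) ((b - s)/2)"
    have h: "0 < h" "h < \<eta>" "s + h \<le> b" using \<eta> sb' unfolding h_def by (auto simp: min_def field_simps)
    have "s + h \<in> S" unfolding S_def
    proof (intro CollectI conjI subsetI)
      show "s + h \<in> {a..b}" using h as by auto
      fix r assume r: "r \<in> {a..s+h}"
      show "r \<in> T"
      proof (cases "r \<le> s")
        case True then show ?thesis using sT r by auto
      next
        case False
        then have r': "0 < r - s" "r - s < \<eta>" "s + (r - s) = r" using r h by auto
        have "\<Phi> r \<le> \<Phi> s + e * (r - s)" using \<eta>(2) r' by metis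
        also have "\<Phi> s \<le> \<Phi> a + e * (s - a)" using sT as unfolding T_def by auto
        finally have "\<Phi> r \<le> \<Phi> a + e * (r - a)" by (simp add: algebra_simps)
        then show ?thesis using r h as unfolding T_def by auto
      qed
    qed
    then have "s + h \<le> s" unfolding s_def using bdd by (rule cSup_upper)
    then show False using h by simp
  qed
  then show ?thesis using sT ab unfolding T_def by auto
qed

lemma cmp_lemma:
  fixes \<Phi> :: "real \<Rightarrow> real"
  assumes ab: "a \<le> b" and cont: "continuous_on {a..b} \<Phi>"
    and loc: "\<And>t e. t \<in> {a..<b} \<Longrightarrow> e > 0 \<Longrightarrow> \<exists>\<eta>>0. \<forall>h. 0 < h \<longrightarrow> h < \<eta> \<longrightarrow> \<Phi> (t+h) \<le> \<Phi> t + e*h"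
  shows "\<Phi> b \<le> \<Phi> a"
proof (rule field_le_epsilon)
  fix e :: real assume e: "0 < e"
  have e': "e / (b - a + 1) > 0" using e ab by simp
  have "\<Phi> b \<le> \<Phi> a + e / (b - a + 1) * (b - a)" by (rule cmp_aux[OF ab cont loc e'])
  also have "e / (b - a + 1) * (b - a) \<le> e"
    using e ab by (simp add: field_simps)
  finally show "\<Phi> b \<le> \<Phi> a + e" by simp
qed

lemma cmp_lemma_pos:
  fixes \<Phi> :: "real \<Rightarrow> real"
  assumes ab: "a \<le> b" and cont: "continuous_on {a..b} \<Phi>" and init: "\<Phi> a \<le> 0"
    and loc: "\<And>t e. t \<in> {a..<b} \<Longrightarrow> 0 \<le> \<Phi> t \<Longrightarrow> e > 0 \<Longrightarrow> \<exists>\<eta>>0. \<forall>h. 0 < h \<longrightarrow> h < \<eta> \<longrightarrow> \<Phi> (t+h) \<le> \<Phi> t + e*h"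
  shows "\<Phi> b \<le> 0"
proof -
  let ?P = "\<lambda>t. max (\<Phi> t) 0"
  have cP: "continuous_on {a..b} ?P" by (intro continuous_intros cont)
  have "?P b \<le> ?P a"
  proof (rule cmp_lemma[OF ab cP])
    fix t e assume t: "t \<in> {a..<b}" and e: "(0::real) < e"
    show "\<exists>\<eta>>0. \<forall>h. 0 < h \<longrightarrow> h < \<eta> \<longrightarrow> ?P (t+h) \<le> ?P t + e*h"
    proof (cases "0 \<le> \<Phi> t")
      case True
      then obtain \<eta> where "\<eta> > 0" "\<forall>h. 0 < h \<longrightarrow> h < \<eta> \<longrightarrow> \<Phi> (t+h) \<le> \<Phi> t + e*h"
        using loc[OF t True e] by auto
      then show ?thesis using True e by (intro exI[of _ \<eta>]) (auto simp: max_def)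
    next
      case False
      have "continuous (at t within {a..b}) \<Phi>" using cont t by (simp add: continuous_on_eq_continuous_within)
      then have "(\<Phi> \<longlongrightarrow> \<Phi> t) (at t within {a..b})" by (simp add: continuous_within)
      then have "\<forall>\<^sub>F r in at t within {a..b}. \<Phi> r < 0" using False by (intro order_tendstoD) auto
      then obtain \<delta> where \<delta>: "\<delta> > 0" "\<forall>r\<in>{a..b}. r \<noteq> t \<and> dist r t < \<delta> \<longrightarrow> \<Phi> r < 0"
        unfolding eventually_at by auto
      show ?thesis
      proof (intro exI[of _ "min \<delta> (b - t)"] conjI allI impI)
        show "0 < min \<delta> (b - t)" using \<delta> t by auto
        fix h assume h: "0 < h" "h < min \<delta> (b - t)"
        then have "\<Phi> (t+h) < 0" using \<delta>(2)[rule_format, of "t+h"] t by (auto simp: dist_real_def)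
        then show "?P (t+h) \<le> ?P t + e*h" using h e by auto
      qed
    qed
  qed
  then show ?thesis using init by simp
qed


locale sys =
  fixes n k d :: nat and tauD a_low a_up b_low :: real
    and P :: "digraph set" and \<sigma> :: "real \<Rightarrow> digraph"
    and a b :: "nat \<Rightarrow> nat \<Rightarrow> (nat \<Rightarrow> pt) \<Rightarrow> (nat \<Rightarrow> pt) \<Rightarrow> real \<Rightarrow> real"
    and u :: "nat \<Rightarrow> (nat \<Rightarrow> pt) \<Rightarrow> real \<Rightarrow> pt" and w :: "nat \<Rightarrow> real \<Rightarrow> pt"
    and x y :: "real \<Rightarrow> nat \<Rightarrow> pt"
  assumes n1: "1 \<le> n" and k1: "1 \<le> k" and tau: "0 < tauD"
    and alow: "0 < a_low" "a_low \<le> a_up" and blow: "0 < b_low"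
    and dw: "dwell_switching tauD P \<sigma>"
    and abnd: "\<forall>i'\<in>{1..n}. \<forall>j'\<in>{1..n}. \<forall>xs ys t. a_low \<le> a i' j' xs ys t \<and> a i' j' xs ys t \<le> a_up"
    and bbnd: "\<forall>i'\<in>{1..n}. \<forall>j'\<in>{1..k}. \<forall>xs ys t. b_low \<le> b i' j' xs ys t"
    and acont: "\<forall>i'\<in>{1..n}. \<forall>j'\<in>{1..n}. weight_cont d n k (a i' j')"
    and bcont: "\<forall>i'\<in>{1..n}. \<forall>j'\<in>{1..k}. weight_cont d n k (b i' j')"
    and wcont: "\<forall>i'\<in>{1..n}. \<forall>l<d. continuous_on {0..} (\<lambda>t. w i' t l)"
    and traj: "trajectory d n k \<sigma> a b u w x y"
begin

abbreviation rhs where "rhs s i l \<equiv> follower_rhs n k \<sigma> a b w x y s i l"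
definition K where "K r = leader_hull d k (y r)"
definition f where "f i r = setdist_pt d (K r) (x r i)"
definition M where "M r = max_dist d n k (x r) (y r)"
definition zn where "zn = znorm d n k u w y"

lemma K_ne: "K r \<noteq> {}" unfolding K_def by (rule hull_nonempty[OF k1])

lemma f_nonneg: "0 \<le> f i r" unfolding f_def by (rule sd_nonneg[OF K_ne])

lemma M_eq: "M r = (MAX i\<in>{1..n}. f i r)"
  unfolding M_def max_dist_def f_def K_def ..

lemma f_le_M: "i \<in> {1..n} \<Longrightarrow> f i r \<le> M r"
  unfolding M_eq by (rule Max_ge) auto

lemma M_nonneg: "0 \<le> M r"
  using f_le_M[of 1 r] f_nonneg[of 1 r] n1 by auto

lemma sigma_const:
  assumes t: "0 \<le> t"
  shows "\<exists>\<eta>>0. \<forall>r\<in>{t..<t+\<eta>}. \<sigma> r = \<sigma> t"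
proof -
  obtain S where S: "S \<subseteq> {0<..}" "\<forall>s\<in>S. \<forall>s'\<in>S. s \<noteq> s' \<longrightarrow> \<bar>s - s'\<bar> \<ge> tauD"
    "\<forall>a b. 0 \<le> a \<longrightarrow> a < b \<longrightarrow> {a<..<b} \<inter> S = {} \<longrightarrow> (\<forall>t\<in>{a..<b}. \<sigma> t = \<sigma> a)"
    using conjunct2[OF dw[unfolded dwell_switching_def]] that by meson
  show ?thesis
  proof (cases "\<exists>s\<in>S. t < s \<and> s < t + tauD")
    case True
    then obtain s0 where s0: "s0 \<in> S" "t < s0" "s0 < t + tauD" by blast
    have "{t<..<s0} \<inter> S = {}"
    proof (rule ccontr)
      assume "{t<..<s0} \<inter> S \<noteq> {}"
      then obtain s' where s': "s' \<in> S" "t < s'" "s' < s0" by auto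
      have "s' \<noteq> s0" using s' by simp
      then have "\<bar>s' - s0\<bar> \<ge> tauD" using S(2)[rule_format, OF s'(1) s0(1)] by simp
      then show False using s' s0 by linarith
    qed
    then have emp: "{t<..<s0} \<inter> S = {}" .
    have "\<forall>r\<in>{t..<s0}. \<sigma> r = \<sigma> t"
    proof
      fix r assume r: "r \<in> {t..<s0}"
      show "\<sigma> r = \<sigma> t" by (rule S(3)[rule_format, OF t s0(2) emp r])
    qed
    moreover have "t + (s0 - t) = s0" by simp
    ultimately have "\<forall>r\<in>{t..<t + (s0 - t)}. \<sigma> r = \<sigma> t" by (simp only:)
    moreover have "0 < s0 - t" using s0 by simp
    ultimately show ?thesis by (intro exI[of _ "s0 - t"] conjI)
  next
    case False
    then have emp: "{t<..<t+tauD} \<inter> S = {}" by auto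
    have tt: "t < t + tauD" using tau by simp
    have "\<forall>r\<in>{t..<t+tauD}. \<sigma> r = \<sigma> t"
    proof
      fix r assume r: "r \<in> {t..<t+tauD}"
      show "\<sigma> r = \<sigma> t" by (rule S(3)[rule_format, OF t tt emp r])
    qed
    then show ?thesis using tau by (intro exI[of _ tauD] conjI)
  qed
qed

lemma x_hasint: "0 \<le> T \<Longrightarrow> i \<in> {1..n} \<Longrightarrow> l < d \<Longrightarrow>
   ((\<lambda>s. rhs s i l) has_integral (x T i l - x 0 i l)) {0..T}"
  using traj unfolding trajectory_def by blast

lemma y_hasint: "0 \<le> T \<Longrightarrow> j \<in> {1..k} \<Longrightarrow> l < d \<Longrightarrow>
   ((\<lambda>s. u j (y s) s l) has_integral (y T j l - y 0 j l)) {0..T}"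
  using traj unfolding trajectory_def by blast

lemma u_absint: "0 \<le> T \<Longrightarrow> j \<in> {1..k} \<Longrightarrow> l < d \<Longrightarrow>
   (\<lambda>s. u j (y s) s l) absolutely_integrable_on {0..T}"
  using traj unfolding trajectory_def by blast

lemma x_incr: "0 \<le> t \<Longrightarrow> t \<le> t' \<Longrightarrow> i \<in> {1..n} \<Longrightarrow> l < d \<Longrightarrow>
   ((\<lambda>s. rhs s i l) has_integral (x t' i l - x t i l)) {t..t'}"
  by (rule gen_incr[where X="\<lambda>s. x s i l"]) (auto intro: x_hasint)

lemma y_incr: "0 \<le> t \<Longrightarrow> t \<le> t' \<Longrightarrow> j \<in> {1..k} \<Longrightarrow> l < d \<Longrightarrow>
   ((\<lambda>s. u j (y s) s l) has_integral (y t' j l - y t j l)) {t..t'}"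
  by (rule gen_incr[where X="\<lambda>s. y s j l"]) (auto intro: y_hasint)

lemma x_cont: "0 \<le> T \<Longrightarrow> i \<in> {1..n} \<Longrightarrow> l < d \<Longrightarrow> continuous_on {0..T} (\<lambda>s. x s i l)"
  by (rule gen_cont[where F="\<lambda>s. rhs s i l"]) (auto intro: x_hasint)

lemma y_cont: "0 \<le> T \<Longrightarrow> j \<in> {1..k} \<Longrightarrow> l < d \<Longrightarrow> continuous_on {0..T} (\<lambda>s. y s j l)"
  by (rule gen_cont[where F="\<lambda>s. u j (y s) s l"]) (auto intro: y_hasint)

lemma w_cont: "i \<in> {1..n} \<Longrightarrow> l < d \<Longrightarrow> continuous_on {0..T} (\<lambda>s. w i s l)"
  by (rule continuous_on_subset[of "{0..}"]) (use wcont in auto)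

lemma wc_comp:
  assumes g: "weight_cont d n k g" and T: "0 \<le> T"
  shows "continuous_on {0..T} (\<lambda>r. g (x r) (y r) r)"
  unfolding continuous_on_eq_continuous_within
proof (intro ballI)
  fix s assume s: "s \<in> {0..T}"
  show "continuous (at s within {0..T}) (\<lambda>r. g (x r) (y r) r)"
    unfolding continuous_within_sequentially
  proof (intro allI impI)
    fix Tm :: "nat \<Rightarrow> real" assume Tm: "(\<forall>m. Tm m \<in> {0..T}) \<and> Tm \<longlonglongrightarrow> s"
    have X: "\<forall>i\<in>{1..n}. \<forall>l<d. (\<lambda>m. x (Tm m) i l) \<longlonglongrightarrow> x s i l"
    proof (intro ballI allI impI)
      fix i l assume i: "i \<in> {1..n}" and l: "l < d"
      have "continuous (at s within {0..T}) (\<lambda>r. x r i l)"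
        using x_cont[OF T i l] s by (simp add: continuous_on_eq_continuous_within)
      then show "(\<lambda>m. x (Tm m) i l) \<longlonglongrightarrow> x s i l"
        using Tm unfolding continuous_within_sequentially o_def by blast
    qed
    have Y: "\<forall>j\<in>{1..k}. \<forall>l<d. (\<lambda>m. y (Tm m) j l) \<longlonglongrightarrow> y s j l"
    proof (intro ballI allI impI)
      fix i l assume i: "i \<in> {1..k}" and l: "l < d"
      have "continuous (at s within {0..T}) (\<lambda>r. y r i l)"
        using y_cont[OF T i l] s by (simp add: continuous_on_eq_continuous_within)
      then show "(\<lambda>m. y (Tm m) i l) \<longlonglongrightarrow> y s i l"
        using Tm unfolding continuous_within_sequentially o_def by blast
    qed
    have "(\<lambda>m. g (x (Tm m)) (y (Tm m)) (Tm m)) \<longlonglongrightarrow> g (x s) (y s) s"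
      by (rule g[unfolded weight_cont_def, rule_format, of "\<lambda>m. x (Tm m)" "x s" "\<lambda>m. y (Tm m)" "y s" Tm s]) (use X Y Tm in auto)
    then show "((\<lambda>r. g (x r) (y r) r) \<circ> Tm) \<longlonglongrightarrow> g (x s) (y s) s" by (simp add: o_def)
  qed
qed

lemma zn_nonneg: "0 \<le> zn r"
  unfolding zn_def znorm_def by (simp add: sum_nonneg)

lemma zn_absint:
  assumes T: "0 \<le> T"
  shows "zn absolutely_integrable_on {0..T}"
proof -
  let ?A = "\<lambda>r. sqrt (\<Sum>i\<in>{1..k}. \<Sum>l<d. (u i (y r) r l)\<^sup>2)"
  let ?B = "\<lambda>r. sqrt (\<Sum>i\<in>{1..n}. \<Sum>l<d. (w i r l)\<^sup>2)"
  have A: "?A absolutely_integrable_on {0..T}"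
  proof (rule sqrt_double_sum_absint)
    fix i l assume "i \<in> {1..k}" "l \<in> {..<d}"
    then show "(\<lambda>r. u i (y r) r l) absolutely_integrable_on {0..T}"
      by (intro u_absint T) auto
  qed auto
  have B: "?B absolutely_integrable_on {0..T}"
  proof (rule sqrt_double_sum_absint)
    fix i l assume "i \<in> {1..n}" "l \<in> {..<d}"
    then show "(\<lambda>r. w i r l) absolutely_integrable_on {0..T}"
      by (intro absolutely_integrable_continuous_real w_cont) auto
  qed auto
  define v where "v m = (if m = (0::nat) then ?A else ?B)" for m
  have "(\<lambda>r. sqrt (\<Sum>m\<in>{0,1}. (v m r)\<^sup>2)) absolutely_integrable_on {0..T}"
    using A B by (intro sqrt_sum_sq_absint) (auto simp: v_def)
  moreover have "(\<lambda>r. sqrt (\<Sum>m\<in>{0,1}. (v m r)\<^sup>2)) = zn"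
    by (rule ext) (simp add: v_def zn_def znorm_def sum_nonneg)
  ultimately show ?thesis by (simp only:)
qed

lemma zn_int: "0 \<le> p \<Longrightarrow> p \<le> q \<Longrightarrow> zn integrable_on {p..q}"
proof -
  assume pq: "0 \<le> p" "p \<le> q"
  have "zn integrable_on {0..q}" using set_lebesgue_integral_eq_integral(1)[OF zn_absint[of q]] pq by simp
  then show ?thesis by (rule integrable_subinterval_real) (use pq in auto)
qed

definition gb where "gb i s r = enorm d (\<lambda>l. x r i l - x s i l) + (\<Sum>j\<in>{1..k}. enorm d (\<lambda>l. y r j l - y s j l))"

lemma f_diff: "\<bar>f i r - f i s\<bar> \<le> gb i s r"
proof -
  have one: "f i r \<le> f i s + gb i s r" for r s
  proof -
    have "f i r \<le> setdist_pt d (K r) (x s i) + enorm d (\<lambda>l. x r i l - x s i l)"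
      unfolding f_def by (rule sd_lip[OF K_ne])
    also have "setdist_pt d (K r) (x s i) \<le> setdist_pt d (K s) (x s i) + (\<Sum>j\<in>{1..k}. enorm d (\<lambda>l. y r j l - y s j l))"
      unfolding K_def by (rule sd_hull_shift[OF k1]) (intro member_le_sum, auto simp: enorm_nonneg)
    finally show ?thesis unfolding f_def gb_def by simp
  qed
  have "gb i r s = gb i s r" unfolding gb_def
    by (simp add: enorm_minus_commute[of d "x r i"] enorm_minus_commute[of d "y r _"])
  then show ?thesis using one[of r s] one[of s r] by linarith
qed

lemma gb_cont:
  assumes T: "0 \<le> T" and s: "s \<in> {0..T}" and i: "i \<in> {1..n}"
  shows "continuous (at s within {0..T}) (gb i s)" and "gb i s s = 0"
proof -
  have cx: "\<And>l. l < d \<Longrightarrow> continuous (at s within {0..T}) (\<lambda>r. x r i l)"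
    using x_cont[OF T i] s by (simp add: continuous_on_eq_continuous_within)
  have cy: "\<And>j l. j \<in> {1..k} \<Longrightarrow> l < d \<Longrightarrow> continuous (at s within {0..T}) (\<lambda>r. y r j l)"
    using y_cont[OF T] s by (simp add: continuous_on_eq_continuous_within)
  show "continuous (at s within {0..T}) (gb i s)" unfolding gb_def
    by (intro continuous_add continuous_sum continuous_enorm_diff cx cy) auto
  show "gb i s s = 0" unfolding gb_def by (simp add: enorm_zero)
qed

lemma f_cont: "0 \<le> T \<Longrightarrow> i \<in> {1..n} \<Longrightarrow> continuous_on {0..T} (f i)"
  unfolding continuous_on_eq_continuous_within
  by (intro ballI cont_by_bound[OF f_diff] gb_cont)

lemma M_cont: "0 \<le> T \<Longrightarrow> continuous_on {0..T} M"
  unfolding continuous_on_eq_continuous_within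
proof (intro ballI)
  fix s assume T: "0 \<le> T" and s: "s \<in> {0..T}"
  show "continuous (at s within {0..T}) M"
  proof (rule cont_by_bound[where g="\<lambda>r. \<Sum>i\<in>{1..n}. gb i s r"])
    fix r
    have "\<bar>M r - M s\<bar> \<le> (\<Sum>i\<in>{1..n}. \<bar>f i r - f i s\<bar>)"
      unfolding M_eq using n1 by (intro max_diff_bound) auto
    also have "\<dots> \<le> (\<Sum>i\<in>{1..n}. gb i s r)" by (intro sum_mono f_diff)
    finally show "\<bar>M r - M s\<bar> \<le> (\<Sum>i\<in>{1..n}. gb i s r)" .
  next
    show "continuous (at s within {0..T}) (\<lambda>r. \<Sum>i\<in>{1..n}. gb i s r)"
      by (intro continuous_sum gb_cont[OF T s]) auto
    show "(\<Sum>i\<in>{1..n}. gb i s s) = 0" using gb_cont(2)[OF T s] by simp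
  qed
qed

end


lemma int_le_const:
  fixes g :: "real \<Rightarrow> real"
  assumes "g integrable_on {p..q}" "p \<le> q" "\<And>r. r \<in> {p..q} \<Longrightarrow> g r \<le> c"
  shows "integral {p..q} g \<le> c * (q - p)"
proof -
  have "integral {p..q} g \<le> integral {p..q} (\<lambda>r. c)"
    by (rule integral_le) (use assms in auto)
  then show ?thesis using assms(2) by (simp add: mult.commute)
qed

lemma int_ge_const:
  fixes g :: "real \<Rightarrow> real"
  assumes "g integrable_on {p..q}" "p \<le> q" "\<And>r. r \<in> {p..q} \<Longrightarrow> c \<le> g r"
  shows "c * (q - p) \<le> integral {p..q} g"
proof -
  have "integral {p..q} (\<lambda>r. c) \<le> integral {p..q} g"
    by (rule integral_le) (use assms in auto)
  then show ?thesis using assms(2) by (simp add: mult.commute)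
qed

lemma int_abs_const:
  fixes g :: "real \<Rightarrow> real"
  assumes "g integrable_on {p..q}" "p \<le> q" "\<And>r. r \<in> {p..q} \<Longrightarrow> \<bar>g r\<bar> \<le> c"
  shows "\<bar>integral {p..q} g\<bar> \<le> c * (q - p)"
proof -
  have "integral {p..q} g \<le> c * (q - p)" by (rule int_le_const) (use assms in \<open>auto simp: abs_le_iff\<close>)
  have "\<And>r. r \<in> {p..q} \<Longrightarrow> -c \<le> g r"
    using assms(3) abs_ge_minus_self by (metis minus_le_iff order_trans)
  then have "(-c) * (q - p) \<le> integral {p..q} g" by (intro int_ge_const assms(1,2))
  moreover note \<open>integral {p..q} g \<le> c * (q - p)\<close>
  ultimately show ?thesis by (simp add: abs_le_iff)
qed

lemma ev_interval:
  fixes t T1 :: real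
  assumes ev: "\<forall>\<^sub>F r in at t within {0..T1}. Q r" and Qt: "Q t" and tT: "0 \<le> t" "t < T1"
  shows "\<forall>\<^sub>F h in at_right 0. \<forall>r\<in>{t..t+h}. Q r"
proof -
  obtain \<delta> where \<delta>: "\<delta> > 0" "\<forall>r\<in>{0..T1}. r \<noteq> t \<and> dist r t < \<delta> \<longrightarrow> Q r"
    using ev unfolding eventually_at by auto
  show ?thesis unfolding eventually_at_right_field
  proof (intro exI[of _ "min \<delta> (T1 - t)"] conjI allI impI ballI)
    show "0 < min \<delta> (T1 - t)" using \<delta> tT by simp
    fix h r assume h: "0 < h" "h < min \<delta> (T1 - t)" and r: "r \<in> {t..t+h}"
    show "Q r"
    proof (cases "r = t")
      case True then show ?thesis using Qt by simp
    next
      case False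
      then show ?thesis using \<delta>(2)[rule_format, of r] r h tT by (auto simp: dist_real_def)
    qed
  qed
qed

lemma sum_opt:
  assumes "finite N" "finite L"
  shows "(\<Sum>m\<in>insert None (Some ` (Inl ` N \<union> Inr ` L)). g m)
       = g None + (\<Sum>j\<in>N. g (Some (Inl j))) + (\<Sum>j\<in>L. g (Some (Inr j)))"
proof -
  have "(\<Sum>m\<in>insert None (Some ` (Inl ` N \<union> Inr ` L)). g m) = g None + (\<Sum>m\<in>Some ` (Inl ` N \<union> Inr ` L). g m)"
    using assms by (subst sum.insert) auto
  also have "(\<Sum>m\<in>Some ` (Inl ` N \<union> Inr ` L). g m) = (\<Sum>m\<in>Inl ` N \<union> Inr ` L. g (Some m))"
    by (subst sum.reindex) auto
  also have "\<dots> = (\<Sum>m\<in>Inl ` N. g (Some m)) + (\<Sum>m\<in>Inr ` L. g (Some m))"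
    using assms by (intro sum.union_disjoint) auto
  also have "(\<Sum>m\<in>Inl ` N. g (Some m)) = (\<Sum>j\<in>N. g (Some (Inl j)))"
    by (subst sum.reindex) auto
  also have "(\<Sum>m\<in>Inr ` L. g (Some m)) = (\<Sum>j\<in>L. g (Some (Inr j)))"
    by (subst sum.reindex) auto
  finally show ?thesis by (simp add: add.assoc)
qed

lemma sum_sq_ineq: "a + b \<le> sqrt 2 * sqrt (a\<^sup>2 + b\<^sup>2)" for a b :: real
proof -
  have "(a + b)\<^sup>2 \<le> 2 * (a\<^sup>2 + b\<^sup>2)" using zero_le_square[of "a-b"] by (simp add: power2_eq_square algebra_simps)
  have "a + b \<le> sqrt ((a+b)\<^sup>2)" by simp
  also have "\<dots> \<le> sqrt (2 * (a\<^sup>2 + b\<^sup>2))" by (rule real_sqrt_le_mono) fact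
  also have "\<dots> = sqrt 2 * sqrt (a\<^sup>2 + b\<^sup>2)" by (rule real_sqrt_mult)
  finally show ?thesis .
qed

context sys begin

lemma u_int: "0 \<le> p \<Longrightarrow> p \<le> q \<Longrightarrow> j \<in> {1..k} \<Longrightarrow> l < d \<Longrightarrow> (\<lambda>s. u j (y s) s l) integrable_on {p..q}"
  using y_incr by blast

lemma w_int: "0 \<le> p \<Longrightarrow> i \<in> {1..n} \<Longrightarrow> l < d \<Longrightarrow> (\<lambda>s. w i s l) integrable_on {p..q}"
  by (intro integrable_continuous_real continuous_on_subset[OF w_cont[of i l q]]) auto

lemma unit_trick: "\<exists>c. 0 \<le> c \<and> c * enorm d v \<le> 1 \<and> enorm d v = (\<Sum>l<d. (c * v l) * v l)"
proof (cases "enorm d v = 0")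
  case True then show ?thesis by (intro exI[of _ 0]) auto
next
  case False
  have "(\<Sum>l<d. (1 / enorm d v * v l) * v l) = 1 / enorm d v * (\<Sum>l<d. v l * v l)"
    by (simp add: sum_distrib_left mult.assoc)
  also have "\<dots> = enorm d v" using False by (simp add: enorm_self_inner power2_eq_square)
  finally show ?thesis using False enorm_nonneg[of d v] by (intro exI[of _ "1 / enorm d v"]) auto
qed

lemma Z1:
  assumes pq: "0 \<le> p" "p \<le> q" and i: "i \<in> {1..n}" and j: "j \<in> {1..k}"
  shows "enorm d (\<lambda>l. integral {p..q} (\<lambda>r. w i r l)) + enorm d (\<lambda>l. y q j l - y p j l)
         \<le> sqrt 2 * integral {p..q} zn"
proof -
  define \<omega> where "\<omega> l = integral {p..q} (\<lambda>r. w i r l)" for l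
  define \<nu> where "\<nu> l = y q j l - y p j l" for l
  have \<nu>i: "\<nu> l = integral {p..q} (\<lambda>r. u j (y r) r l)" if "l < d" for l
    unfolding \<nu>_def using y_incr[OF pq j that] by (simp add: integral_unique)
  obtain c1 where c1: "0 \<le> c1" "c1 * enorm d \<omega> \<le> 1" "enorm d \<omega> = (\<Sum>l<d. (c1 * \<omega> l) * \<omega> l)"
    using unit_trick by blast
  obtain c2 where c2: "0 \<le> c2" "c2 * enorm d \<nu> \<le> 1" "enorm d \<nu> = (\<Sum>l<d. (c2 * \<nu> l) * \<nu> l)"
    using unit_trick by blast
  define G where "G r = (\<Sum>l<d. (c1 * \<omega> l) * w i r l) + (\<Sum>l<d. (c2 * \<nu> l) * u j (y r) r l)" for r
  have Gi: "G integrable_on {p..q}" unfolding G_def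
    by (intro integrable_add integrable_sum integrable_on_mult_right w_int u_int pq i j) auto
  have "enorm d \<omega> + enorm d \<nu> = integral {p..q} G"
  proof -
    have i1: "\<And>l. l < d \<Longrightarrow> (\<lambda>r. (c1 * \<omega> l) * w i r l) integrable_on {p..q}"
      by (intro integrable_on_mult_right w_int pq i)
    have i2: "\<And>l. l < d \<Longrightarrow> (\<lambda>r. (c2 * \<nu> l) * u j (y r) r l) integrable_on {p..q}"
      by (intro integrable_on_mult_right u_int pq j)
    have s1: "integral {p..q} (\<lambda>r. \<Sum>l<d. (c1 * \<omega> l) * w i r l) = (\<Sum>l<d. (c1 * \<omega> l) * \<omega> l)"
      by (subst Henstock_Kurzweil_Integration.integral_sum) (auto intro: i1 simp: \<omega>_def[symmetric])
    have s2: "integral {p..q} (\<lambda>r. \<Sum>l<d. (c2 * \<nu> l) * u j (y r) r l) = (\<Sum>l<d. (c2 * \<nu> l) * \<nu> l)"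
      by (subst Henstock_Kurzweil_Integration.integral_sum) (auto intro: i2 simp: \<nu>i[symmetric])
    have "integral {p..q} G = (\<Sum>l<d. (c1 * \<omega> l) * \<omega> l) + (\<Sum>l<d. (c2 * \<nu> l) * \<nu> l)"
      unfolding G_def
      by (subst Henstock_Kurzweil_Integration.integral_add) (use i1 i2 s1 s2 in \<open>auto intro!: integrable_sum\<close>)
    then show ?thesis using c1 c2 by simp
  qed
  also have "\<dots> \<le> integral {p..q} (\<lambda>r. sqrt 2 * zn r)"
  proof (rule integral_le[OF Gi])
    show "(\<lambda>r. sqrt 2 * zn r) integrable_on {p..q}" by (intro integrable_on_mult_right zn_int pq)
    fix r assume r: "r \<in> {p..q}"
    have "(\<Sum>l<d. (c1 * \<omega> l) * w i r l) \<le> enorm d (\<lambda>l. c1 * \<omega> l) * enorm d (\<lambda>l. w i r l)"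
      by (rule enorm_cs)
    also have "\<dots> \<le> enorm d (\<lambda>l. w i r l)"
      using c1(1,2) by (simp add: enorm_scale mult_left_le_one_le enorm_nonneg)
    finally have g1: "(\<Sum>l<d. (c1 * \<omega> l) * w i r l) \<le> enorm d (\<lambda>l. w i r l)" .
    have "(\<Sum>l<d. (c2 * \<nu> l) * u j (y r) r l) \<le> enorm d (\<lambda>l. c2 * \<nu> l) * enorm d (\<lambda>l. u j (y r) r l)"
      by (rule enorm_cs)
    also have "\<dots> \<le> enorm d (\<lambda>l. u j (y r) r l)"
      using c2(1,2) by (simp add: enorm_scale mult_left_le_one_le enorm_nonneg)
    finally have g2: "(\<Sum>l<d. (c2 * \<nu> l) * u j (y r) r l) \<le> enorm d (\<lambda>l. u j (y r) r l)" .
    have "enorm d (\<lambda>l. w i r l) + enorm d (\<lambda>l. u j (y r) r l)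
          \<le> sqrt 2 * sqrt ((enorm d (\<lambda>l. w i r l))\<^sup>2 + (enorm d (\<lambda>l. u j (y r) r l))\<^sup>2)"
      by (rule sum_sq_ineq)
    also have "sqrt ((enorm d (\<lambda>l. w i r l))\<^sup>2 + (enorm d (\<lambda>l. u j (y r) r l))\<^sup>2) \<le> zn r"
    proof -
      have "(enorm d (\<lambda>l. w i r l))\<^sup>2 + (enorm d (\<lambda>l. u j (y r) r l))\<^sup>2
           = (\<Sum>l<d. (w i r l)\<^sup>2) + (\<Sum>l<d. (u j (y r) r l)\<^sup>2)"
        by (simp add: enorm_def sum_nonneg)
      also have "\<dots> \<le> (\<Sum>i'\<in>{1..n}. \<Sum>l<d. (w i' r l)\<^sup>2) + (\<Sum>i'\<in>{1..k}. \<Sum>l<d. (u i' (y r) r l)\<^sup>2)"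
        using i j by (intro add_mono member_le_sum[where f="\<lambda>i'. \<Sum>l<d. (w i' r l)\<^sup>2"]
            member_le_sum[where f="\<lambda>i'. \<Sum>l<d. (u i' (y r) r l)\<^sup>2"]) (auto intro: sum_nonneg)
      finally show ?thesis unfolding zn_def znorm_def by (simp add: add.commute)
    qed
    finally show "G r \<le> sqrt 2 * zn r" unfolding G_def using g1 g2 by simp
  qed
  also have "\<dots> = sqrt 2 * integral {p..q} zn" by simp
  finally show ?thesis unfolding \<omega>_def \<nu>_def .
qed

end


context sys begin

lemma ev_cont_comp:
  fixes T t e :: real and g :: "'p \<Rightarrow> real \<Rightarrow> real"
  assumes T: "0 \<le> T" and tT: "t \<in> {0..T}" and c: "\<And>p. p \<in> F \<Longrightarrow> continuous_on {0..T} (g p)"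
    and F: "finite F" and e: "0 < e"
  shows "\<forall>\<^sub>F r in at t within {0..T}. \<forall>p\<in>F. \<bar>g p r - g p t\<bar> \<le> e"
proof (rule eventually_ball_finite[OF F], intro ballI)
  fix p assume p: "p \<in> F"
  have "continuous (at t within {0..T}) (g p)"
    using c[OF p] tT by (simp add: continuous_on_eq_continuous_within)
  then have "(g p \<longlongrightarrow> g p t) (at t within {0..T})" by (simp add: continuous_within)
  then have "\<forall>\<^sub>F r in at t within {0..T}. dist (g p r) (g p t) < e" using e by (rule tendstoD)
  then show "\<forall>\<^sub>F r in at t within {0..T}. \<bar>g p r - g p t\<bar> \<le> e"
    by eventually_elim (simp add: dist_real_def)
qed

lemma local_est:
  assumes t: "0 \<le> t" and i: "i \<in> {1..n}" and e: "0 < e"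
  shows "\<exists>\<eta>>0. \<forall>h. 0 < h \<longrightarrow> h < \<eta> \<longrightarrow> (\<exists>A B. 0 \<le> A \<and> A \<le> real n * a_up * h \<and> 0 \<le> B \<and> A + B \<le> 1 \<and>
     (\<forall>j0\<in>{1..k}. (Inr j0, Inl i) \<in> \<sigma> t \<longrightarrow> b_low * h \<le> B) \<and>
     f i (t+h) \<le> (1 - A - B) * f i t + A * M t + sqrt 2 * integral {t..t+h} zn + e * h)"
proof -
  define E where "E = \<sigma> t"
  define N where "N = Nset n E i"
  define L where "L = Lset k E i"
  have N: "N \<subseteq> {1..n}" "finite N" unfolding N_def Nset_def by auto
  have L: "L \<subseteq> {1..k}" "finite L" unfolding L_def Lset_def by auto
  define T1 where "T1 = t + 1"
  have T1: "0 \<le> T1" "t < T1" "t \<in> {0..T1}" using t unfolding T1_def by auto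
  obtain \<eta>0 where \<eta>0: "\<eta>0 > 0" "\<forall>r\<in>{t..<t+\<eta>0}. \<sigma> r = \<sigma> t" using sigma_const[OF t] by blast
  define bt where "bt j = b i j (x t) (y t) t" for j
  have bt0: "j \<in> {1..k} \<Longrightarrow> b_low \<le> bt j" for j unfolding bt_def using bbnd i by auto
  define Bm where "Bm = (\<Sum>j\<in>{1..k}. bt j + 1)"
  have Bm0: "0 \<le> Bm" unfolding Bm_def using bt0 blow by (intro sum_nonneg) (smt (verit))
  define C where "C = real n * a_up + Bm"
  have C0: "0 \<le> C" unfolding C_def using Bm0 alow by simp
  define \<epsilon> where "\<epsilon> = e / (2 * ((C + 1) * (real d + 1)))"
  have \<epsilon>0: "0 < \<epsilon>" unfolding \<epsilon>_def using e C0 by simp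
  have key: "real d * (2 * \<epsilon> * C) \<le> e"
  proof -
    have pos: "0 < (C + 1) * (real d + 1)" using C0 by simp
    have gen: "real d * (2 * (e / (2 * Q)) * C) = e * (C * real d) / Q" if "0 < Q" for Q
      using that by (simp add: field_simps)
    have "real d * (2 * \<epsilon> * C) = e * (C * real d) / ((C + 1) * (real d + 1))"
      unfolding \<epsilon>_def by (rule gen[OF pos])
    also have "\<dots> \<le> e"
    proof -
      have "C * real d \<le> (C+1) * (real d + 1)" using C0 by (simp add: algebra_simps)
      then have "e * (C * real d) \<le> e * ((C + 1) * (real d + 1))" using e by (intro mult_left_mono) auto
      then show ?thesis using pos by (simp add: pos_divide_le_eq)
    qed
    finally show ?thesis by simp
  qed
  have ev1: "\<forall>\<^sub>F h in at_right 0. 0 < h \<and> h < \<eta>0 \<and> h < 1 \<and> h * C \<le> 1"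
    unfolding eventually_at_right_field
  proof (intro exI[of _ "min \<eta>0 (min 1 (1 / (C + 1)))"] conjI allI impI)
    show "(0::real) < min \<eta>0 (min 1 (1 / (C + 1)))" using \<eta>0 C0 by simp
    fix h :: real assume h: "0 < h" "h < min \<eta>0 (min 1 (1 / (C + 1)))"
    show "0 < h" "h < \<eta>0" "h < 1" using h by auto
    have "h * (C + 1) \<le> 1" using h C0 by (simp add: field_simps)
    then show "h * C \<le> 1" using h by (simp add: algebra_simps)
  qed
  have ev2: "\<forall>\<^sub>F h in at_right 0. \<forall>r\<in>{t..t+h}. \<forall>p\<in>{1..n} \<times> {..<d}. \<bar>x r (fst p) (snd p) - x t (fst p) (snd p)\<bar> \<le> \<epsilon>"
    by (rule ev_interval[OF ev_cont_comp[where g="\<lambda>p r. x r (fst p) (snd p)"] _ t T1(2)])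
       (use T1 \<epsilon>0 in \<open>auto intro: x_cont\<close>)
  have ev3: "\<forall>\<^sub>F h in at_right 0. \<forall>r\<in>{t..t+h}. \<forall>p\<in>{1..k} \<times> {..<d}. \<bar>y r (fst p) (snd p) - y t (fst p) (snd p)\<bar> \<le> \<epsilon>"
    by (rule ev_interval[OF ev_cont_comp[where g="\<lambda>p r. y r (fst p) (snd p)"] _ t T1(2)])
       (use T1 \<epsilon>0 in \<open>auto intro: y_cont\<close>)
  have ev4: "\<forall>\<^sub>F h in at_right 0. \<forall>r\<in>{t..t+h}. \<forall>j\<in>{1..k}. \<bar>b i j (x r) (y r) r - b i j (x t) (y t) t\<bar> \<le> 1"
    by (rule ev_interval[OF ev_cont_comp[where g="\<lambda>j r. b i j (x r) (y r) r"] _ t T1(2)])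
       (use T1 i bcont in \<open>auto intro: wc_comp\<close>)
  have "\<forall>\<^sub>F h in at_right 0. (\<exists>A B. 0 \<le> A \<and> A \<le> real n * a_up * h \<and> 0 \<le> B \<and> A + B \<le> 1 \<and>
     (\<forall>j0\<in>{1..k}. (Inr j0, Inl i) \<in> \<sigma> t \<longrightarrow> b_low * h \<le> B) \<and>
     f i (t+h) \<le> (1 - A - B) * f i t + A * M t + sqrt 2 * integral {t..t+h} zn + e * h)"
    using ev1 ev2 ev3 ev4
  proof eventually_elim
    case (elim h)
    then have h: "0 < h" "h < \<eta>0" "h < 1" "h * C \<le> 1" by auto
    have xe: "\<And>r j l. r \<in> {t..t+h} \<Longrightarrow> j \<in> {1..n} \<Longrightarrow> l < d \<Longrightarrow> \<bar>x r j l - x t j l\<bar> \<le> \<epsilon>"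
      using elim(2) by fastforce
    have ye: "\<And>r j l. r \<in> {t..t+h} \<Longrightarrow> j \<in> {1..k} \<Longrightarrow> l < d \<Longrightarrow> \<bar>y r j l - y t j l\<bar> \<le> \<epsilon>"
      using elim(3) by fastforce
    have be: "\<And>r j. r \<in> {t..t+h} \<Longrightarrow> j \<in> {1..k} \<Longrightarrow> b i j (x r) (y r) r \<le> bt j + 1"
      using elim(4) unfolding bt_def by fastforce
    have sub: "{t..t+h} \<subseteq> {0..T1}" using t h unfolding T1_def by auto
    have \<sigma>c: "\<sigma> r = E" if r: "r \<in> {t..t+h}" for r
    proof -
      have "r \<in> {t..<t+\<eta>0}" using r h by auto
      then show ?thesis unfolding E_def by (rule \<eta>0(2)[rule_format])
    qed
    have cx: "\<And>j l. j \<in> {1..n} \<Longrightarrow> l < d \<Longrightarrow> continuous_on {t..t+h} (\<lambda>r. x r j l)"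
      by (rule continuous_on_subset[OF x_cont[OF T1(1)] sub])
    have cy: "\<And>j l. j \<in> {1..k} \<Longrightarrow> l < d \<Longrightarrow> continuous_on {t..t+h} (\<lambda>r. y r j l)"
      by (rule continuous_on_subset[OF y_cont[OF T1(1)] sub])
    have cw: "\<And>l. l < d \<Longrightarrow> continuous_on {t..t+h} (\<lambda>r. w i r l)"
      by (rule continuous_on_subset[OF w_cont[OF i] sub])
    have ca: "\<And>j. j \<in> {1..n} \<Longrightarrow> continuous_on {t..t+h} (\<lambda>r. a i j (x r) (y r) r)"
      by (rule continuous_on_subset[OF wc_comp[OF _ T1(1)] sub]) (use acont i in auto)
    have cb: "\<And>j. j \<in> {1..k} \<Longrightarrow> continuous_on {t..t+h} (\<lambda>r. b i j (x r) (y r) r)"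
      by (rule continuous_on_subset[OF wc_comp[OF _ T1(1)] sub]) (use bcont i in auto)
    have th: "t \<le> t + h" using h by simp
    define \<alpha> where "\<alpha> j = integral {t..t+h} (\<lambda>r. a i j (x r) (y r) r)" for j
    define \<beta> where "\<beta> j = integral {t..t+h} (\<lambda>r. b i j (x r) (y r) r)" for j
    define A where "A = (\<Sum>j\<in>N. \<alpha> j)"
    define B where "B = (\<Sum>j\<in>L. \<beta> j)"
    define Wv where "Wv l = integral {t..t+h} (\<lambda>r. w i r l)" for l
    have \<alpha>b: "a_low * h \<le> \<alpha> j \<and> \<alpha> j \<le> a_up * h" if j: "j \<in> {1..n}" for j
    proof -
      have ab: "a_low \<le> a i j (x r) (y r) r \<and> a i j (x r) (y r) r \<le> a_up" for r
        using abnd i j by blast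
      have I: "(\<lambda>r. a i j (x r) (y r) r) integrable_on {t..t+h}" by (rule integrable_continuous_real[OF ca[OF j]])
      have "a_low * (t + h - t) \<le> \<alpha> j" unfolding \<alpha>_def by (rule int_ge_const[OF I th]) (use ab in blast)
      moreover have "\<alpha> j \<le> a_up * (t + h - t)" unfolding \<alpha>_def by (rule int_le_const[OF I th]) (use ab in blast)
      ultimately show ?thesis by simp
    qed
    have \<beta>b: "b_low * h \<le> \<beta> j \<and> \<beta> j \<le> (bt j + 1) * h" if j: "j \<in> {1..k}" for j
    proof -
      have bl: "b_low \<le> b i j (x r) (y r) r" for r
        using bbnd i j by blast
      have I: "(\<lambda>r. b i j (x r) (y r) r) integrable_on {t..t+h}" by (rule integrable_continuous_real[OF cb[OF j]])
      have "b_low * (t + h - t) \<le> \<beta> j" unfolding \<beta>_def by (rule int_ge_const[OF I th]) (use bl in blast)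
      moreover have "\<beta> j \<le> (bt j + 1) * (t + h - t)" unfolding \<beta>_def by (rule int_le_const[OF I th]) (use be j in blast)
      ultimately show ?thesis by simp
    qed
    have \<alpha>0: "0 \<le> \<alpha> j" if j: "j \<in> N" for j
    proof -
      have "j \<in> {1..n}" using N j by auto
      then have "a_low * h \<le> \<alpha> j" using \<alpha>b by blast
      moreover have "0 < a_low * h" using alow h by simp
      ultimately show ?thesis by linarith
    qed
    have \<beta>0: "0 \<le> \<beta> j" if j: "j \<in> L" for j
    proof -
      have "j \<in> {1..k}" using L j by auto
      then have "b_low * h \<le> \<beta> j" using \<beta>b by blast
      moreover have "0 < b_low * h" using blow h by simp
      ultimately show ?thesis by linarith
    qed
    have A0: "0 \<le> A" unfolding A_def using \<alpha>0 by (simp add: sum_nonneg)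
    have B0: "0 \<le> B" unfolding B_def using \<beta>0 by (simp add: sum_nonneg)
    have Au: "A \<le> real n * a_up * h"
    proof -
      have "A \<le> of_nat (card N) * (a_up * h)" unfolding A_def
        by (rule sum_bounded_above) (use \<alpha>b N in auto)
      also have "\<dots> \<le> real n * (a_up * h)"
        using card_mono[OF _ N(1)] alow h by (intro mult_right_mono) auto
      finally show ?thesis by (simp add: mult.assoc)
    qed
    have Bu: "B \<le> Bm * h"
    proof -
      have "B \<le> (\<Sum>j\<in>L. (bt j + 1) * h)" unfolding B_def using \<beta>b L by (intro sum_mono) auto
      also have "\<dots> \<le> (\<Sum>j\<in>{1..k}. (bt j + 1) * h)"
        using L bt0 blow h by (intro sum_mono2) (auto intro!: mult_nonneg_nonneg, smt (verit))
      also have "\<dots> = Bm * h" unfolding Bm_def by (simp add: sum_distrib_right)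
      finally show ?thesis .
    qed
    have AB1: "A + B \<le> 1"
    proof -
      have "A + B \<le> real n * a_up * h + Bm * h" using Au Bu by simp
      also have "\<dots> = h * C" unfolding C_def by (simp add: algebra_simps)
      finally show ?thesis using h by simp
    qed
    have edge: "\<forall>j0\<in>{1..k}. (Inr j0, Inl i) \<in> \<sigma> t \<longrightarrow> b_low * h \<le> B"
    proof (intro ballI impI)
      fix j0 assume j0: "j0 \<in> {1..k}" and "(Inr j0, Inl i) \<in> \<sigma> t"
      then have "j0 \<in> L" unfolding L_def Lset_def E_def by auto
      then have "\<beta> j0 \<le> B" unfolding B_def using \<beta>0 L by (intro member_le_sum) auto
      then show "b_low * h \<le> B" using \<beta>b[OF j0] by simp
    qed
    define Err where "Err l = x (t+h) i l - x t i l - ((\<Sum>j\<in>N. \<alpha> j * (x t j l - x t i l)) + (\<Sum>j\<in>L. \<beta> j * (y t j l - x t i l)) + Wv l)" for l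
    have Errb: "\<bar>Err l\<bar> \<le> 2 * \<epsilon> * C * h" if l: "l < d" for l
    proof -
      define g1 where "g1 r = (\<Sum>j\<in>N. a i j (x r) (y r) r * (x r j l - x r i l)) + (\<Sum>j\<in>L. b i j (x r) (y r) r * (y r j l - x r i l)) + w i r l" for r
      define g2 where "g2 r = (\<Sum>j\<in>N. a i j (x r) (y r) r * (x t j l - x t i l)) + (\<Sum>j\<in>L. b i j (x r) (y r) r * (y t j l - x t i l)) + w i r l" for r
      have caN: "\<And>j. j \<in> N \<Longrightarrow> continuous_on {t..t+h} (\<lambda>r. a i j (x r) (y r) r)" using ca N by auto
      have cbL: "\<And>j. j \<in> L \<Longrightarrow> continuous_on {t..t+h} (\<lambda>r. b i j (x r) (y r) r)" using cb L by auto
      have cxN: "\<And>j. j \<in> N \<Longrightarrow> continuous_on {t..t+h} (\<lambda>r. x r j l)" using cx N l by auto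
      have cyL: "\<And>j. j \<in> L \<Longrightarrow> continuous_on {t..t+h} (\<lambda>r. y r j l)" using cy L l by auto
      have cxi: "continuous_on {t..t+h} (\<lambda>r. x r i l)" using cx i l by auto
      have cwl: "continuous_on {t..t+h} (\<lambda>r. w i r l)" using cw l by auto
      have cg1: "continuous_on {t..t+h} g1" unfolding g1_def
        by (intro continuous_on_add continuous_on_sum continuous_on_mult continuous_on_diff caN cbL cxN cyL cxi cwl)
      have cg2: "continuous_on {t..t+h} g2" unfolding g2_def
        by (intro continuous_on_add continuous_on_sum continuous_on_mult continuous_on_diff caN cbL cwl continuous_on_const)
      have Ig1: "g1 integrable_on {t..t+h}" by (rule integrable_continuous_real[OF cg1])
      have Ig2: "g2 integrable_on {t..t+h}" by (rule integrable_continuous_real[OF cg2])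
      have "x (t+h) i l - x t i l = integral {t..t+h} (\<lambda>r. rhs r i l)"
        using x_incr[OF t th i l] by (simp add: integral_unique)
      also have "\<dots> = integral {t..t+h} g1"
      proof (rule integral_cong)
        fix r assume r: "r \<in> {t..t+h}"
        show "rhs r i l = g1 r" unfolding follower_rhs_def g1_def N_def L_def \<sigma>c[OF r] by (rule refl)
      qed
      finally have x1: "x (t+h) i l - x t i l = integral {t..t+h} g1" .
      have iaN: "\<And>j. j \<in> N \<Longrightarrow> (\<lambda>r. a i j (x r) (y r) r * (x t j l - x t i l)) integrable_on {t..t+h}"
        by (intro integrable_on_mult_left integrable_continuous_real caN)
      have ibL: "\<And>j. j \<in> L \<Longrightarrow> (\<lambda>r. b i j (x r) (y r) r * (y t j l - x t i l)) integrable_on {t..t+h}"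
        by (intro integrable_on_mult_left integrable_continuous_real cbL)
      have x2: "integral {t..t+h} g2 = (\<Sum>j\<in>N. \<alpha> j * (x t j l - x t i l)) + (\<Sum>j\<in>L. \<beta> j * (y t j l - x t i l)) + Wv l"
      proof -
        have s1: "integral {t..t+h} (\<lambda>r. \<Sum>j\<in>N. a i j (x r) (y r) r * (x t j l - x t i l)) = (\<Sum>j\<in>N. \<alpha> j * (x t j l - x t i l))"
          by (subst Henstock_Kurzweil_Integration.integral_sum) (use N iaN in \<open>auto simp: \<alpha>_def\<close>)
        have s2: "integral {t..t+h} (\<lambda>r. \<Sum>j\<in>L. b i j (x r) (y r) r * (y t j l - x t i l)) = (\<Sum>j\<in>L. \<beta> j * (y t j l - x t i l))"
          by (subst Henstock_Kurzweil_Integration.integral_sum) (use L ibL in \<open>auto simp: \<beta>_def\<close>)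
        have Is1: "(\<lambda>r. \<Sum>j\<in>N. a i j (x r) (y r) r * (x t j l - x t i l)) integrable_on {t..t+h}"
          by (intro integrable_sum N iaN)
        have Is2: "(\<lambda>r. \<Sum>j\<in>L. b i j (x r) (y r) r * (y t j l - x t i l)) integrable_on {t..t+h}"
          by (intro integrable_sum L ibL)
        have Iw: "(\<lambda>r. w i r l) integrable_on {t..t+h}" by (rule integrable_continuous_real[OF cwl])
        show ?thesis unfolding g2_def
          by (simp add: Henstock_Kurzweil_Integration.integral_add Is1 Is2 Iw integrable_add s1 s2 Wv_def)
      qed
      have eqE: "Err l = integral {t..t+h} (\<lambda>r. g1 r - g2 r)"
        unfolding Err_def x1 x2[symmetric] by (simp add: Henstock_Kurzweil_Integration.integral_diff Ig1 Ig2)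
      have bndI: "\<bar>integral {t..t+h} (\<lambda>r. g1 r - g2 r)\<bar> \<le> (2 * \<epsilon> * C) * (t + h - t)"
      proof (rule int_abs_const[OF integrable_diff[OF Ig1 Ig2] th])
        fix r assume r: "r \<in> {t..t+h}"
        have eq: "g1 r - g2 r = (\<Sum>j\<in>N. a i j (x r) (y r) r * ((x r j l - x t j l) - (x r i l - x t i l)))
                          + (\<Sum>j\<in>L. b i j (x r) (y r) r * ((y r j l - y t j l) - (x r i l - x t i l)))"
        proof -
          have "g1 r - g2 r = (\<Sum>j\<in>N. a i j (x r) (y r) r * (x r j l - x r i l) - a i j (x r) (y r) r * (x t j l - x t i l))
              + (\<Sum>j\<in>L. b i j (x r) (y r) r * (y r j l - x r i l) - b i j (x r) (y r) r * (y t j l - x t i l))"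
            unfolding g1_def g2_def by (simp add: sum_subtractf)
          also have "\<dots> = (\<Sum>j\<in>N. a i j (x r) (y r) r * ((x r j l - x t j l) - (x r i l - x t i l)))
                          + (\<Sum>j\<in>L. b i j (x r) (y r) r * ((y r j l - y t j l) - (x r i l - x t i l)))"
            by (intro arg_cong2[where f="(+)"] sum.cong refl) (simp_all add: algebra_simps)
          finally show ?thesis .
        qed
        have b1: "\<bar>(\<Sum>j\<in>N. a i j (x r) (y r) r * ((x r j l - x t j l) - (x r i l - x t i l)))
                          + (\<Sum>j\<in>L. b i j (x r) (y r) r * ((y r j l - y t j l) - (x r i l - x t i l)))\<bar> \<le> (\<Sum>j\<in>N. a_up * (2 * \<epsilon>)) + (\<Sum>j\<in>L. (bt j + 1) * (2 * \<epsilon>))"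
        proof (rule order_trans[OF abs_triangle_ineq add_mono])
          show "\<bar>\<Sum>j\<in>N. a i j (x r) (y r) r * ((x r j l - x t j l) - (x r i l - x t i l))\<bar> \<le> (\<Sum>j\<in>N. a_up * (2 * \<epsilon>))"
          proof (rule order_trans[OF sum_abs sum_mono])
            fix j assume j: "j \<in> N"
            then have j': "j \<in> {1..n}" using N by auto
            have a0: "a_low \<le> a i j (x r) (y r) r \<and> a i j (x r) (y r) r \<le> a_up" using abnd i j' by blast
            then have a1: "0 \<le> a i j (x r) (y r) r" "a i j (x r) (y r) r \<le> a_up" using alow by auto
            have "\<bar>(x r j l - x t j l) - (x r i l - x t i l)\<bar> \<le> 2 * \<epsilon>"
              using xe[OF r j' l] xe[OF r i l] by linarith
            then show "\<bar>a i j (x r) (y r) r * ((x r j l - x t j l) - (x r i l - x t i l))\<bar> \<le> a_up * (2 * \<epsilon>)"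
              using a1 by (simp add: abs_mult mult_mono)
          qed
          show "\<bar>\<Sum>j\<in>L. b i j (x r) (y r) r * ((y r j l - y t j l) - (x r i l - x t i l))\<bar> \<le> (\<Sum>j\<in>L. (bt j + 1) * (2 * \<epsilon>))"
          proof (rule order_trans[OF sum_abs sum_mono])
            fix j assume j: "j \<in> L"
            then have j': "j \<in> {1..k}" using L by auto
            have b0: "b_low \<le> b i j (x r) (y r) r" using bbnd i j' by blast
            then have b1: "0 \<le> b i j (x r) (y r) r" "b i j (x r) (y r) r \<le> bt j + 1"
              using blow be[OF r j'] by auto
            have "\<bar>(y r j l - y t j l) - (x r i l - x t i l)\<bar> \<le> 2 * \<epsilon>"
              using ye[OF r j' l] xe[OF r i l] by linarith
            then show "\<bar>b i j (x r) (y r) r * ((y r j l - y t j l) - (x r i l - x t i l))\<bar> \<le> (bt j + 1) * (2 * \<epsilon>)"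
              using b1 by (simp add: abs_mult mult_mono)
          qed
        qed
        have b2: "(\<Sum>j\<in>N. a_up * (2 * \<epsilon>)) + (\<Sum>j\<in>L. (bt j + 1) * (2 * \<epsilon>)) \<le> real n * a_up * (2 * \<epsilon>) + Bm * (2 * \<epsilon>)"
        proof (rule add_mono)
          have "(\<Sum>j\<in>N. a_up * (2 * \<epsilon>)) = real (card N) * (a_up * (2 * \<epsilon>))" by simp
          also have "\<dots> \<le> real n * (a_up * (2 * \<epsilon>))"
            using card_mono[OF _ N(1)] alow \<epsilon>0 by (intro mult_right_mono) auto
          finally show "(\<Sum>j\<in>N. a_up * (2 * \<epsilon>)) \<le> real n * a_up * (2 * \<epsilon>)" by (simp add: mult.assoc)
          have "(\<Sum>j\<in>L. (bt j + 1) * (2 * \<epsilon>)) \<le> (\<Sum>j\<in>{1..k}. (bt j + 1) * (2 * \<epsilon>))"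
            using L bt0 blow \<epsilon>0 by (intro sum_mono2) (auto intro!: mult_nonneg_nonneg, smt (verit))
          also have "\<dots> = Bm * (2 * \<epsilon>)" unfolding Bm_def by (simp add: sum_distrib_right)
          finally show "(\<Sum>j\<in>L. (bt j + 1) * (2 * \<epsilon>)) \<le> Bm * (2 * \<epsilon>)" .
        qed
        have b3: "real n * a_up * (2 * \<epsilon>) + Bm * (2 * \<epsilon>) = 2 * \<epsilon> * C" unfolding C_def by (simp add: algebra_simps)
        show "\<bar>g1 r - g2 r\<bar> \<le> 2 * \<epsilon> * C" unfolding eq using b1 b2 b3 by linarith
      qed
      show ?thesis using eqE bndI by simp
    qed
    have Errn: "enorm d Err \<le> e * h"
    proof -
      have "enorm d Err \<le> (\<Sum>l<d. \<bar>Err l\<bar>)" by (rule enorm_le_sum_abs)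
      also have "\<dots> \<le> (\<Sum>l<d. 2 * \<epsilon> * C * h)" by (intro sum_mono Errb) simp
      also have "\<dots> = real d * (2 * \<epsilon> * C) * h" by simp
      also have "\<dots> \<le> e * h" using key h by (intro mult_right_mono) auto
      finally show ?thesis .
    qed
    define V where "V l = x (t+h) i l - Wv l - Err l" for l
    have hV: "V l = (1 - A - B) * x t i l + (\<Sum>j\<in>N. \<alpha> j * x t j l) + (\<Sum>j\<in>L. \<beta> j * y t j l)" for l
    proof -
      have s1: "(\<Sum>j\<in>N. \<alpha> j * (x t j l - x t i l)) = (\<Sum>j\<in>N. \<alpha> j * x t j l) - A * x t i l"
        unfolding A_def by (simp add: right_diff_distrib sum_subtractf sum_distrib_right)
      have s2: "(\<Sum>j\<in>L. \<beta> j * (y t j l - x t i l)) = (\<Sum>j\<in>L. \<beta> j * y t j l) - B * x t i l"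
        unfolding B_def by (simp add: right_diff_distrib sum_subtractf sum_distrib_right)
      show ?thesis unfolding V_def Err_def using s1 s2 by (simp add: algebra_simps)
    qed
    define I :: "(nat + nat) option set" where "I = insert None (Some ` (Inl ` N \<union> Inr ` L))"
    define \<theta> where "\<theta> m = (case m of None \<Rightarrow> 1 - A - B | Some (Inl j) \<Rightarrow> \<alpha> j | Some (Inr j) \<Rightarrow> \<beta> j)" for m :: "(nat + nat) option"
    define q where "q m = (case m of None \<Rightarrow> x t i | Some (Inl j) \<Rightarrow> x t j | Some (Inr j) \<Rightarrow> y t j)" for m :: "(nat + nat) option"
    have If: "finite I" unfolding I_def using N L by simp
    have \<theta>0: "0 \<le> \<theta> m" if m: "m \<in> I" for m
      using m AB1 \<alpha>0 \<beta>0 unfolding I_def \<theta>_def by auto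
    have \<theta>1: "(\<Sum>m\<in>I. \<theta> m) = 1"
      unfolding I_def sum_opt[OF N(2) L(2)] by (simp add: \<theta>_def A_def B_def)
    have Vc: "V l = (\<Sum>m\<in>I. \<theta> m * q m l)" if "l < d" for l
      unfolding I_def sum_opt[OF N(2) L(2)] hV by (simp add: \<theta>_def q_def)
    have conv: "setdist_pt d (K t) V \<le> (\<Sum>m\<in>I. \<theta> m * setdist_pt d (K t) (q m))"
      unfolding K_def by (rule sd_convex[OF k1 If \<theta>0 \<theta>1 Vc])
    have zero: "setdist_pt d (K t) (y t j) = 0" if "j \<in> L" for j
      using L that unfolding K_def by (intro sd_member hull_vertex) auto
    have conv2: "(\<Sum>m\<in>I. \<theta> m * setdist_pt d (K t) (q m)) = (1-A-B) * f i t + (\<Sum>j\<in>N. \<alpha> j * f j t)"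
      unfolding I_def sum_opt[OF N(2) L(2)] by (simp add: \<theta>_def q_def f_def zero)
    have fM: "(\<Sum>j\<in>N. \<alpha> j * f j t) \<le> A * M t"
      unfolding A_def sum_distrib_right
    proof (rule sum_mono)
      fix j assume j: "j \<in> N"
      then have "j \<in> {1..n}" using N by auto
      then show "\<alpha> j * f j t \<le> \<alpha> j * M t" using \<alpha>0[OF j] f_le_M by (intro mult_left_mono) auto
    qed
    have sdV: "setdist_pt d (K t) V \<le> (1-A-B) * f i t + A * M t" using conv conv2 fM by linarith
    define Dy where "Dy j = enorm d (\<lambda>l. y (t+h) j l - y t j l)" for j
    define D where "D = Max (Dy ` {1..k})"
    have "D \<in> Dy ` {1..k}" unfolding D_def using k1 by (intro Max_in) auto
    then obtain jm where jm: "jm \<in> {1..k}" "D = Dy jm" by auto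
    have Dge: "Dy j \<le> D" if "j \<in> {1..k}" for j unfolding D_def using that by (intro Max_ge) auto
    have st1: "f i (t+h) \<le> setdist_pt d (K t) (x (t+h) i) + D"
      unfolding f_def K_def by (rule sd_hull_shift[OF k1]) (use Dge in \<open>auto simp: Dy_def\<close>)
    have st2: "setdist_pt d (K t) (x (t+h) i) \<le> setdist_pt d (K t) V + enorm d (\<lambda>l. x (t+h) i l - V l)"
      by (rule sd_lip[OF K_ne])
    have st3: "enorm d (\<lambda>l. x (t+h) i l - V l) \<le> enorm d Wv + enorm d Err"
    proof -
      have "enorm d (\<lambda>l. x (t+h) i l - V l) = enorm d (\<lambda>l. Wv l + Err l)" unfolding V_def by simp
      also have "\<dots> \<le> enorm d Wv + enorm d Err" by (rule enorm_triangle)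
      finally show ?thesis .
    qed
    have st4: "enorm d Wv + D \<le> sqrt 2 * integral {t..t+h} zn"
      using Z1[OF t th i jm(1)] unfolding Wv_def jm(2) Dy_def by simp
    have fin: "f i (t+h) \<le> (1 - A - B) * f i t + A * M t + sqrt 2 * integral {t..t+h} zn + e * h"
      using st1 st2 st3 st4 sdV Errn by linarith
    show ?case using A0 Au B0 AB1 edge fin by blast
  qed
  then show ?thesis unfolding eventually_at_right_field by (metis)
qed

end

lemma arith_step:
  fixes A B c h b f Mt Mb kp s :: real
  assumes "0 \<le> A" "0 \<le> B" "A \<le> c*h" "b*h \<le> B" "0 \<le> f" "Mt \<le> Mb" "0 \<le> Mb" "0 < h" "0 < b" "0 \<le> c"
    "0 \<le> kp" "kp * (1 + (b+c)* s) \<le> b" "(1 - kp* s)*Mb \<le> f" "0 \<le> s"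
  shows "A*(Mt - f) - B*f + kp*h*Mb \<le> 0"
proof (cases "f \<le> Mb")
  case True
  have 1: "A*(Mt - f) \<le> A*(Mb - f)" using assms by (intro mult_left_mono) auto
  have 2: "A*(Mb - f) \<le> (c*h)*(Mb - f)" using assms True by (intro mult_right_mono) auto
  have 3: "(b*h)*f \<le> B*f" using assms by (intro mult_right_mono) auto
  have 4: "h*((b+c)*((1 - kp* s)*Mb)) \<le> h*((b+c)*f)" using assms by (intro mult_left_mono) auto
  have 5: "h*((kp * (1 + (b+c)* s))*Mb) \<le> h*(b*Mb)" using assms by (intro mult_left_mono mult_right_mono) auto
  have e1: "(c*h)*(Mb - f) - (b*h)*f + kp*h*Mb = h*((c+kp)*Mb) - h*((b+c)*f)" by (simp add: algebra_simps)
  have e2: "h*((c+kp)*Mb) - h*((b+c)*((1 - kp* s)*Mb)) = h*((kp * (1 + (b+c)* s))*Mb) - h*(b*Mb)" by (simp add: algebra_simps)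
  have "A*(Mt - f) - B*f + kp*h*Mb \<le> (c*h)*(Mb - f) - (b*h)*f + kp*h*Mb" using 1 2 3 by linarith
  also have "\<dots> = h*((c+kp)*Mb) - h*((b+c)*f)" by (rule e1)
  also have "\<dots> \<le> h*((c+kp)*Mb) - h*((b+c)*((1 - kp* s)*Mb))" using 4 by linarith
  also have "\<dots> = h*((kp * (1 + (b+c)* s))*Mb) - h*(b*Mb)" by (rule e2)
  also have "\<dots> \<le> 0" using 5 by linarith
  finally show ?thesis .
next
  case False
  have 1: "A*(Mt - f) \<le> 0" using assms False by (intro mult_nonneg_nonpos) auto
  have 3: "(b*h)*f \<le> B*f" using assms by (intro mult_right_mono) auto
  have 4: "(b*h)*Mb \<le> (b*h)*f" using assms False by (intro mult_left_mono) auto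
  have k: "kp \<le> b"
  proof -
    have "kp * 1 \<le> kp * (1 + (b+c)* s)" using assms by (intro mult_left_mono) auto
    then show ?thesis using assms by simp
  qed
  have 5: "kp*h*Mb \<le> b*h*Mb" using assms k by (intro mult_right_mono) auto
  show ?thesis using 1 3 4 5 by linarith
qed

context sys begin

lemma G_split: "0 \<le> p \<Longrightarrow> p \<le> q \<Longrightarrow> q \<le> r \<Longrightarrow> integral {p..r} zn = integral {p..q} zn + integral {q..r} zn"
  by (metis Henstock_Kurzweil_Integration.integral_combine zn_int order_trans)

lemma G_nonneg: "p \<le> q \<Longrightarrow> 0 \<le> p \<Longrightarrow> 0 \<le> integral {p..q} zn"
  by (rule Henstock_Kurzweil_Integration.integral_nonneg[OF zn_int]) (auto simp: zn_nonneg)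

lemma G_cont: "0 \<le> p \<Longrightarrow> p \<le> q \<Longrightarrow> continuous_on {p..q} (\<lambda>s. integral {p..s} zn)"
  by (rule indefinite_integral_continuous_1[OF zn_int])

lemma M_local:
  assumes t: "0 \<le> t" and e: "0 < e"
  shows "\<exists>\<eta>>0. \<forall>h. 0 < h \<longrightarrow> h < \<eta> \<longrightarrow> M (t+h) \<le> M t + sqrt 2 * integral {t..t+h} zn + e * h"
proof -
  have "\<forall>i\<in>{1..n}. \<forall>\<^sub>F h in at_right 0. f i (t+h) \<le> M t + sqrt 2 * integral {t..t+h} zn + e * h"
  proof
    fix i assume i: "i \<in> {1..n}"
    obtain \<eta> where \<eta>: "\<eta> > 0" "\<forall>h. 0 < h \<longrightarrow> h < \<eta> \<longrightarrow> (\<exists>A B. 0 \<le> A \<and> A \<le> real n * a_up * h \<and> 0 \<le> B \<and> A + B \<le> 1 \<and>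
     (\<forall>j0\<in>{1..k}. (Inr j0, Inl i) \<in> \<sigma> t \<longrightarrow> b_low * h \<le> B) \<and>
     f i (t+h) \<le> (1 - A - B) * f i t + A * M t + sqrt 2 * integral {t..t+h} zn + e * h)"
      using local_est[OF t i e] by blast
    show "\<forall>\<^sub>F h in at_right 0. f i (t+h) \<le> M t + sqrt 2 * integral {t..t+h} zn + e * h"
      unfolding eventually_at_right_field
    proof (intro exI[of _ \<eta>] conjI allI impI)
      show "(0::real) < \<eta>" by (rule \<eta>(1))
      fix h :: real assume h: "0 < h" "h < \<eta>"
      then obtain A B where AB: "0 \<le> A" "0 \<le> B" "A + B \<le> 1"
        "f i (t+h) \<le> (1 - A - B) * f i t + A * M t + sqrt 2 * integral {t..t+h} zn + e * h"
        using \<eta>(2) by blast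
      have "(1 - A - B) * f i t \<le> (1 - A - B) * M t" using AB f_le_M[OF i] by (intro mult_left_mono) auto
      moreover have "0 \<le> B * M t" using AB M_nonneg by simp
      ultimately show "f i (t+h) \<le> M t + sqrt 2 * integral {t..t+h} zn + e * h"
        using AB(4) by (simp add: algebra_simps)
    qed
  qed
  then have "\<forall>\<^sub>F h in at_right 0. \<forall>i\<in>{1..n}. f i (t+h) \<le> M t + sqrt 2 * integral {t..t+h} zn + e * h"
    by (rule eventually_ball_finite[rotated]) simp
  then have "\<forall>\<^sub>F h in at_right 0. M (t+h) \<le> M t + sqrt 2 * integral {t..t+h} zn + e * h"
  proof eventually_elim
    case (elim h)
    show ?case unfolding M_eq[of "t+h"] using elim n1 by (subst Max_le_iff) auto
  qed
  then show ?thesis unfolding eventually_at_right_field by blast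
qed

lemma M_bound:
  assumes t0: "0 \<le> t0" and T: "t0 \<le> T"
  shows "M T \<le> M t0 + sqrt 2 * integral {t0..T} zn"
proof -
  define \<Phi> where "\<Phi> s = M s - sqrt 2 * integral {t0..s} zn" for s
  have "\<Phi> T \<le> \<Phi> t0"
  proof (rule cmp_lemma[OF T])
    have c1: "continuous_on {t0..T} M" by (rule continuous_on_subset[OF M_cont[of T]]) (use t0 T in auto)
    have c2: "continuous_on {t0..T} (\<lambda>s. integral {t0..s} zn)" by (rule G_cont[OF t0 T])
    show "continuous_on {t0..T} \<Phi>" unfolding \<Phi>_def by (intro continuous_intros c1 c2)
    fix t e :: real assume t: "t \<in> {t0..<T}" and e: "0 < e"
    obtain \<eta> where \<eta>: "\<eta> > 0" "\<forall>h. 0 < h \<longrightarrow> h < \<eta> \<longrightarrow> M (t+h) \<le> M t + sqrt 2 * integral {t..t+h} zn + e * h"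
      using M_local[of t e] t t0 e by auto
    show "\<exists>\<eta>>0. \<forall>h. 0 < h \<longrightarrow> h < \<eta> \<longrightarrow> \<Phi> (t+h) \<le> \<Phi> t + e*h"
    proof (intro exI[of _ \<eta>] conjI allI impI)
      show "0 < \<eta>" by (rule \<eta>(1))
      fix h assume h: "0 < h" "h < \<eta>"
      have "integral {t0..t+h} zn = integral {t0..t} zn + integral {t..t+h} zn"
        using t t0 h by (intro G_split) auto
      then have sp: "sqrt 2 * integral {t0..t+h} zn = sqrt 2 * integral {t0..t} zn + sqrt 2 * integral {t..t+h} zn"
        by (simp add: distrib_left)
      have Mh: "M (t+h) \<le> M t + sqrt 2 * integral {t..t+h} zn + e * h" using \<eta>(2) h by blast
      show "\<Phi> (t+h) \<le> \<Phi> t + e*h" unfolding \<Phi>_def using Mh sp by linarith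
    qed
  qed
  moreover have "sqrt 2 * integral {t0..t0} zn = 0" by simp
  ultimately show ?thesis unfolding \<Phi>_def by linarith
qed

definition \<kappa> where "\<kappa> = b_low / (1 + (b_low + real n * a_up) * tauD)"

lemma \<kappa>_props: "0 < \<kappa>" "\<kappa> * (1 + (b_low + real n * a_up) * tauD) = b_low" "\<kappa> * tauD < 1"
proof -
  have pos: "0 < 1 + (b_low + real n * a_up) * tauD" using blow alow tau by (simp add: add_pos_nonneg)
  show "0 < \<kappa>" unfolding \<kappa>_def using blow pos by simp
  show "\<kappa> * (1 + (b_low + real n * a_up) * tauD) = b_low" unfolding \<kappa>_def using pos by simp
  have "b_low * tauD < 1 + (b_low + real n * a_up) * tauD" using alow tau by (simp add: algebra_simps add_pos_nonneg)
  then show "\<kappa> * tauD < 1" unfolding \<kappa>_def using pos by (simp add: field_simps)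
qed

lemma f_bound:
  assumes t0: "0 \<le> t0" and i: "i \<in> {1..n}" and j: "j \<in> {1..k}"
    and edge: "\<forall>t\<in>{t0..<t0 + tauD}. (Inr j, Inl i) \<in> \<sigma> t"
    and T: "T \<in> {t0..t0 + tauD}"
  shows "f i T \<le> (1 - \<kappa> * (T - t0)) * M t0 + 2 * sqrt 2 * integral {t0..t0+tauD} zn"
proof -
  define Z where "Z = integral {t0..t0+tauD} zn"
  define Mb where "Mb = M t0 + sqrt 2 * Z"
  have Z0: "0 \<le> Z" unfolding Z_def using t0 tau by (intro G_nonneg) auto
  have Mb0: "0 \<le> Mb" unfolding Mb_def using Z0 M_nonneg by simp
  have GZ: "integral {t0..s} zn \<le> Z" if "t0 \<le> s" "s \<le> t0 + tauD" for s
    using G_split[of t0 s "t0+tauD"] G_nonneg[of s "t0+tauD"] that t0 unfolding Z_def by simp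
  have T': "t0 \<le> T" "T \<le> t0 + tauD" using T by auto
  define \<Phi> where "\<Phi> s = f i s - (1 - \<kappa> * (s - t0)) * Mb - sqrt 2 * integral {t0..s} zn" for s
  have "\<Phi> T \<le> 0"
  proof (rule cmp_lemma_pos[OF T'(1)])
    have c1: "continuous_on {t0..T} (f i)" by (rule continuous_on_subset[OF f_cont[OF _ i, of T]]) (use t0 T' in auto)
    have c2: "continuous_on {t0..T} (\<lambda>s. integral {t0..s} zn)" by (rule G_cont[OF t0 T'(1)])
    show "continuous_on {t0..T} \<Phi>" unfolding \<Phi>_def by (intro continuous_intros c1 c2)
    have "0 \<le> sqrt 2 * Z" using Z0 by simp
    then show "\<Phi> t0 \<le> 0" unfolding \<Phi>_def Mb_def using f_le_M[OF i, of t0] by simp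
    fix t e :: real assume t: "t \<in> {t0..<T}" and \<Phi>t: "0 \<le> \<Phi> t" and e: "0 < e"
    have t': "0 \<le> t" "t0 \<le> t" "t < t0 + tauD" using t t0 T' by auto
    obtain \<eta> where \<eta>: "\<eta> > 0" "\<forall>h. 0 < h \<longrightarrow> h < \<eta> \<longrightarrow> (\<exists>A B. 0 \<le> A \<and> A \<le> real n * a_up * h \<and> 0 \<le> B \<and> A + B \<le> 1 \<and>
     (\<forall>j0\<in>{1..k}. (Inr j0, Inl i) \<in> \<sigma> t \<longrightarrow> b_low * h \<le> B) \<and>
     f i (t+h) \<le> (1 - A - B) * f i t + A * M t + sqrt 2 * integral {t..t+h} zn + e * h)"
      using local_est[OF t'(1) i e] by blast
    show "\<exists>\<eta>>0. \<forall>h. 0 < h \<longrightarrow> h < \<eta> \<longrightarrow> \<Phi> (t+h) \<le> \<Phi> t + e*h"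
    proof (intro exI[of _ \<eta>] conjI allI impI)
      show "0 < \<eta>" by (rule \<eta>(1))
      fix h assume h: "0 < h" "h < \<eta>"
      then obtain A B where AB: "0 \<le> A" "A \<le> real n * a_up * h" "0 \<le> B" "A + B \<le> 1"
        "\<forall>j0\<in>{1..k}. (Inr j0, Inl i) \<in> \<sigma> t \<longrightarrow> b_low * h \<le> B"
        "f i (t+h) \<le> (1 - A - B) * f i t + A * M t + sqrt 2 * integral {t..t+h} zn + e * h"
        using \<eta>(2) by blast
      have "(Inr j, Inl i) \<in> \<sigma> t" using edge t' by auto
      then have Bb: "b_low * h \<le> B" using AB(5) j by blast
      have "sqrt 2 * integral {t0..t} zn \<le> sqrt 2 * Z" using GZ[OF t'(2)] t' by (intro mult_left_mono) auto
      then have Mt: "M t \<le> Mb" using M_bound[OF t0 t'(2)] unfolding Mb_def by linarith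
      have "0 \<le> sqrt 2 * integral {t0..t} zn" using G_nonneg[of t0 t] t' t0 by simp
      then have fge: "(1 - \<kappa> * (t - t0)) * Mb \<le> f i t"
        using \<Phi>t unfolding \<Phi>_def by linarith
      have kk: "\<kappa> * (1 + (b_low + real n * a_up) * (t - t0)) \<le> b_low"
      proof -
        have "\<kappa> * (1 + (b_low + real n * a_up) * (t - t0)) \<le> \<kappa> * (1 + (b_low + real n * a_up) * tauD)"
          using \<kappa>_props(1) t' blow alow by (intro mult_left_mono add_left_mono mult_left_mono) auto
        then show ?thesis using \<kappa>_props(2) by simp
      qed
      have step: "A * (M t - f i t) - B * f i t + \<kappa> * h * Mb \<le> 0"
        by (rule arith_step[where c="real n * a_up" and b=b_low and s="t - t0"])
           (use AB Bb f_nonneg Mt Mb0 h blow alow \<kappa>_props(1) kk fge t' in auto)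
      have split: "integral {t0..t+h} zn = integral {t0..t} zn + integral {t..t+h} zn"
        using t' t0 h by (intro G_split) auto
      have "f i (t+h) \<le> f i t + (A * (M t - f i t) - B * f i t) + sqrt 2 * integral {t..t+h} zn + e * h"
        using AB(6) by (simp add: algebra_simps)
      then show "\<Phi> (t+h) \<le> \<Phi> t + e*h" unfolding \<Phi>_def split using step
        by (simp add: algebra_simps)
    qed
  qed
  then have fT: "f i T \<le> (1 - \<kappa> * (T - t0)) * Mb + sqrt 2 * integral {t0..T} zn" unfolding \<Phi>_def by simp
  have GT: "sqrt 2 * integral {t0..T} zn \<le> sqrt 2 * Z" using GZ T' by (intro mult_left_mono) auto
  have m1: "(1 - \<kappa> * (T - t0)) * (sqrt 2 * Z) \<le> 1 * (sqrt 2 * Z)"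
    using \<kappa>_props(1) T' Z0 by (intro mult_right_mono) auto
  have eqMb: "(1 - \<kappa> * (T - t0)) * Mb = (1 - \<kappa> * (T - t0)) * M t0 + (1 - \<kappa> * (T - t0)) * (sqrt 2 * Z)"
    unfolding Mb_def by (simp add: distrib_left)
  have two: "2 * sqrt 2 * Z = sqrt 2 * Z + sqrt 2 * Z" by simp
  show ?thesis unfolding Z_def[symmetric] using fT GT m1 eqMb two by linarith
qed

lemma final:
  assumes "0 \<le> t0" "i \<in> {1..n}" "j \<in> {1..k}" "\<forall>t\<in>{t0..<t0 + tauD}. (Inr j, Inl i) \<in> \<sigma> t"
    "t \<in> {t0..t0 + tauD}"
  shows "setdist_pt d (leader_hull d k (y t)) (x t i)
             \<le> (1 - b_low / (1 + (b_low + real n * a_up) * tauD) * (t - t0)) * max_dist d n k (x t0) (y t0)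
               + 2 * sqrt 2 * integral {t0..t0 + tauD} (znorm d n k u w y)"
  using f_bound[OF assms] unfolding f_def K_def M_def zn_def \<kappa>_def .

end

theorem lemma9:
  fixes n :: nat and tauD a_up b_low :: real
  assumes "n \<ge> 2" and "tauD > 0" and "a_up > 0" and "b_low > 0"
  shows "\<exists>\<delta> :: real \<Rightarrow> real.
     (\<forall>s t. 0 \<le> s \<longrightarrow> s < t \<longrightarrow> t \<le> tauD \<longrightarrow> \<delta> t < \<delta> s) \<and>
     (\<forall>t\<in>{0..tauD}. 0 < \<delta> t \<and> \<delta> t \<le> 1) \<and> \<delta> 0 = 1 \<and>
     (\<forall>(k::nat) (d::nat) (a_low::real) P \<sigma> a b u w x y t0 i j.
        k \<ge> 1 \<longrightarrow> d \<ge> 1 \<longrightarrow> 0 < a_low \<longrightarrow> a_low \<le> a_up \<longrightarrow>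
        finite P \<longrightarrow> (\<forall>E\<in>P. admissible_graph n k E) \<longrightarrow>
        dwell_switching tauD P \<sigma> \<longrightarrow>
        (\<forall>i'\<in>{1..n}. \<forall>j'\<in>{1..n}. \<forall>xs ys t.
            a_low \<le> a i' j' xs ys t \<and> a i' j' xs ys t \<le> a_up) \<longrightarrow>
        (\<forall>i'\<in>{1..n}. \<forall>j'\<in>{1..k}. \<forall>xs ys t. b_low \<le> b i' j' xs ys t) \<longrightarrow>
        (\<forall>i'\<in>{1..n}. \<forall>j'\<in>{1..n}. weight_cont d n k (a i' j')) \<longrightarrow>
        (\<forall>i'\<in>{1..n}. \<forall>j'\<in>{1..k}. weight_cont d n k (b i' j')) \<longrightarrow>
        (\<forall>i'\<in>{1..k}. \<forall>t. input_cont_y d k (\<lambda>ys. u i' ys t)) \<longrightarrow>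
        (\<forall>i'\<in>{1..k}. \<forall>ys. pw_cont d (\<lambda>t. u i' ys t)) \<longrightarrow>
        (\<forall>i'\<in>{1..n}. \<forall>l<d. continuous_on {0..} (\<lambda>t. w i' t l)) \<longrightarrow>
        trajectory d n k \<sigma> a b u w x y \<longrightarrow>
        t0 \<ge> 0 \<longrightarrow> i \<in> {1..n} \<longrightarrow> j \<in> {1..k} \<longrightarrow>
        (\<forall>t\<in>{t0..<t0 + tauD}. (Inr j, Inl i) \<in> \<sigma> t) \<longrightarrow>
        (\<forall>t\<in>{t0..t0 + tauD}.
           setdist_pt d (leader_hull d k (y t)) (x t i)
             \<le> \<delta> (t - t0) * max_dist d n k (x t0) (y t0)
               + 2 * sqrt 2 * integral {t0..t0 + tauD} (znorm d n k u w y)))"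
proof -
  let ?\<kappa> = "b_low / (1 + (b_low + real n * a_up) * tauD)"
  have pos: "0 < 1 + (b_low + real n * a_up) * tauD" using assms by (simp add: add_pos_nonneg)
  have k0: "0 < ?\<kappa>" using assms pos by simp
  have k1: "?\<kappa> * tauD < 1"
  proof -
    have "b_low * tauD < 1 + (b_low + real n * a_up) * tauD" using assms by (simp add: algebra_simps add_pos_nonneg)
    then show ?thesis using pos by (simp add: field_simps)
  qed
  have main: "(\<forall>(k::nat) (d::nat) (a_low::real) P \<sigma> a b u w x y t0 i j.
        k \<ge> 1 \<longrightarrow> d \<ge> 1 \<longrightarrow> 0 < a_low \<longrightarrow> a_low \<le> a_up \<longrightarrow>
        finite P \<longrightarrow> (\<forall>E\<in>P. admissible_graph n k E) \<longrightarrow>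
        dwell_switching tauD P \<sigma> \<longrightarrow>
        (\<forall>i'\<in>{1..n}. \<forall>j'\<in>{1..n}. \<forall>xs ys t.
            a_low \<le> a i' j' xs ys t \<and> a i' j' xs ys t \<le> a_up) \<longrightarrow>
        (\<forall>i'\<in>{1..n}. \<forall>j'\<in>{1..k}. \<forall>xs ys t. b_low \<le> b i' j' xs ys t) \<longrightarrow>
        (\<forall>i'\<in>{1..n}. \<forall>j'\<in>{1..n}. weight_cont d n k (a i' j')) \<longrightarrow>
        (\<forall>i'\<in>{1..n}. \<forall>j'\<in>{1..k}. weight_cont d n k (b i' j')) \<longrightarrow>
        (\<forall>i'\<in>{1..k}. \<forall>t. input_cont_y d k (\<lambda>ys. u i' ys t)) \<longrightarrow>
        (\<forall>i'\<in>{1..k}. \<forall>ys. pw_cont d (\<lambda>t. u i' ys t)) \<longrightarrow>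
        (\<forall>i'\<in>{1..n}. \<forall>l<d. continuous_on {0..} (\<lambda>t. w i' t l)) \<longrightarrow>
        trajectory d n k \<sigma> a b u w x y \<longrightarrow>
        t0 \<ge> 0 \<longrightarrow> i \<in> {1..n} \<longrightarrow> j \<in> {1..k} \<longrightarrow>
        (\<forall>t\<in>{t0..<t0 + tauD}. (Inr j, Inl i) \<in> \<sigma> t) \<longrightarrow>
        (\<forall>t\<in>{t0..t0 + tauD}.
           setdist_pt d (leader_hull d k (y t)) (x t i)
             \<le> (1 - b_low / (1 + (b_low + real n * a_up) * tauD) * (t - t0)) * max_dist d n k (x t0) (y t0)
               + 2 * sqrt 2 * integral {t0..t0 + tauD} (znorm d n k u w y)))"
  proof (intro allI impI ballI, goal_cases)
    case (1 k d a_low P \<sigma> a b u w x y t0 i j t)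
    interpret S: sys n k d tauD a_low a_up b_low P \<sigma> a b u w x y
      by unfold_locales (use 1 assms in auto)
    show ?case by (rule S.final) (use 1 in auto)
  qed
  show ?thesis
    apply (rule exI[of _ "\<lambda>s. 1 - ?\<kappa> * s"])
    apply (intro conjI)
    subgoal
    proof (intro allI impI)
      fix s t :: real assume st: "0 \<le> s" "s < t" "t \<le> tauD"
      have "?\<kappa> * s < ?\<kappa> * t" using k0 st by (intro mult_strict_left_mono) auto
      then show "1 - ?\<kappa> * t < 1 - ?\<kappa> * s" by simp
    qed
    subgoal
    proof
      fix t assume t: "t \<in> {0..tauD}"
      have "?\<kappa> * t \<le> ?\<kappa> * tauD" using k0 t by (intro mult_left_mono) auto
      moreover have "0 \<le> ?\<kappa> * t" using k0 t by (intro mult_nonneg_nonneg) auto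
      ultimately show "0 < 1 - ?\<kappa> * t \<and> 1 - ?\<kappa> * t \<le> 1" using k1 by linarith
    qed
    subgoal by simp
    by (rule main)
qed


end
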